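(* Let $f\in C^1[0,1]$ with $f(0)=0$, $h:=f'$, and let $q$ satisfy condition (q). Then there exists $c^*\in\mathbb R$ with $$h(0)+2\sqrt{\liminf_{\varphi\to0^+}\frac{q(\varphi)}{\varphi}}\le c^*\le 2\sqrt{\sup_{\varphi\in(0,1]}\frac{q(\varphi)}{\varphi}}+\sup_{\varphi\in(0,1]}\frac{f(\varphi)}{\varphi}$$ such that problem $(P^{00}_c)$ admits a solution if and only if $c\ge c^*$, and in that case the solution is unique.
   Context: Condition (q): $q\in C[0,1]$, $q>0$ on $(0,1)$, $q(0)=q(1)=0$, and $\limsup_{\varphi\to0^+}q(\varphi)/\varphi<+\infty$. For $c\in\mathbb R$, a solution of problem $(P_c)$ is a function $z\in C[0,1]\cap C^1(0,1)$ with $\dot z(\varphi)=h(\varphi)-c-q(\varphi)/z(\varphi)$ and $z(\varphi)<0$ for all $\varphi\in(0,1)$, and $z(0)=0$. A solution of $(P^{00}_c)$ is a solution of $(P_c)$ which also satisfies $z(1)=0$. *)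

theory Defs
  imports "HOL-Analysis.Analysis"
begin

definition cond_q :: "(real \<Rightarrow> real) \<Rightarrow> bool" where
  "cond_q q \<longleftrightarrow> continuous_on {0..1} q \<and> (\<forall>x\<in>{0<..<1}. q x > 0) \<and> q 0 = 0 \<and> q 1 = 0 \<and>
     Limsup (at_right 0) (\<lambda>x. ereal (q x / x)) < \<infinity>"

definition solP :: "(real \<Rightarrow> real) \<Rightarrow> (real \<Rightarrow> real) \<Rightarrow> real \<Rightarrow> (real \<Rightarrow> real) \<Rightarrow> bool" where
  "solP h q c z \<longleftrightarrow> continuous_on {0..1} z \<and>
     (\<forall>x\<in>{0<..<1}. (z has_real_derivative (h x - c - q x / z x)) (at x)) \<and>
     continuous_on {0<..<1} (deriv z) \<and>
     (\<forall>x\<in>{0<..<1}. z x < 0) \<and> z 0 = 0"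

definition solP00 :: "(real \<Rightarrow> real) \<Rightarrow> (real \<Rightarrow> real) \<Rightarrow> real \<Rightarrow> (real \<Rightarrow> real) \<Rightarrow> bool" where
  "solP00 h q c z \<longleftrightarrow> solP h q c z \<and> z 1 = 0"

end

theory Submission imports Defs begin

lemma deriv_from_integral:
  fixes U K :: "real \<Rightarrow> real"
  assumes K: "continuous_on {a..b} K"
    and U: "\<And>x. x \<in> {a..b} \<Longrightarrow> U x = U a + integral {a..x} K"
    and x: "x \<in> {a<..<b}"
  shows "(U has_real_derivative K x) (at x)"
proof -
  have xab: "x \<in> {a..b}" using x by auto
  have "((\<lambda>x. U a + integral {a..x} K) has_real_derivative K x) (at x within {a..b})"
    using integral_has_real_derivative[OF K xab] by (auto intro!: derivative_eq_intros)
  then have "((\<lambda>x. U a + integral {a..x} K) has_real_derivative K x) (at x)"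
    using x by (subst (asm) at_within_interior) auto
  then show ?thesis
  proof (rule has_field_derivative_transform_within_open[where S="{a<..<b}"])
    fix y assume "y \<in> {a<..<b}"
    then show "U a + integral {a..y} K = U y" using U[of y] by auto
  qed (use x in auto)
qed

lemma genlim:
  fixes u k :: "nat \<Rightarrow> real \<Rightarrow> real" and U K :: "real \<Rightarrow> real"
  assumes ab: "a \<le> b"
    and u: "\<And>n x. x \<in> {a..b} \<Longrightarrow> u n x = u n a + integral {a..x} (k n)"
    and kc: "\<And>n. continuous_on {a..b} (k n)"
    and kB: "\<And>n x. x \<in> {a..b} \<Longrightarrow> \<bar>k n x\<bar> \<le> B"
    and uU: "\<And>x. x \<in> {a..b} \<Longrightarrow> (\<lambda>n. u n x) \<longlonglongrightarrow> U x"
    and kK: "\<And>x. x \<in> {a..b} \<Longrightarrow> (\<lambda>n. k n x) \<longlonglongrightarrow> K x"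
  shows "\<And>x. x \<in> {a..b} \<Longrightarrow> U x = U a + integral {a..x} K"
    and "\<And>x y. x \<in> {a..b} \<Longrightarrow> y \<in> {a..b} \<Longrightarrow> \<bar>U x - U y\<bar> \<le> B * \<bar>x - y\<bar>"
proof -
  fix x assume x: "x \<in> {a..b}"
  have sub: "{a..x} \<subseteq> {a..b}" using x by auto
  have int: "k n integrable_on {a..x}" for n
    using integrable_continuous_real[OF continuous_on_subset[OF kc sub]] .
  have "(\<lambda>n. integral {a..x} (k n)) \<longlonglongrightarrow> integral {a..x} K"
    by (rule dominated_convergence(2)[where h="\<lambda>_. B"]) (use int sub kB kK in auto)
  then have "(\<lambda>n. u n a + integral {a..x} (k n)) \<longlonglongrightarrow> U a + integral {a..x} K"
    using uU[of a] ab by (auto intro!: tendsto_add)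
  moreover have "(\<lambda>n. u n a + integral {a..x} (k n)) = (\<lambda>n. u n x)" using u[OF x] by auto
  ultimately show "U x = U a + integral {a..x} K"
    using uU[OF x] LIMSEQ_unique by (metis (no_types))
next
  fix x y assume x: "x \<in> {a..b}" and y: "y \<in> {a..b}"
  have key: "\<bar>u n x - u n y\<bar> \<le> B * \<bar>x - y\<bar>" if xy: "y \<le> x" "x \<in> {a..b}" "y \<in> {a..b}" for n x y
  proof -
    have int: "k n integrable_on {a..x}"
      using integrable_continuous_real[OF continuous_on_subset[OF kc]] xy by auto
    have "integral {a..x} (k n) = integral {a..y} (k n) + integral {y..x} (k n)"
      using Henstock_Kurzweil_Integration.integral_combine[OF _ _ int, of y] xy by auto
    then have "u n x - u n y = integral {y..x} (k n)" using u[of x n] u[of y n] xy by auto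
    moreover have "\<bar>integral {y..x} (k n)\<bar> \<le> B * (x - y)"
    proof -
      have "norm (integral {y..x} (k n)) \<le> B * (x - y)"
        by (rule integral_bound) (use kB xy continuous_on_subset[OF kc, of "{y..x}"] in auto)
      then show ?thesis using xy by auto
    qed
    ultimately show ?thesis using xy by auto
  qed
  have "(\<lambda>n. \<bar>u n x - u n y\<bar>) \<longlonglongrightarrow> \<bar>U x - U y\<bar>"
    using uU[OF x] uU[OF y] by (intro tendsto_intros)
  moreover have "\<bar>u n x - u n y\<bar> \<le> B * \<bar>x - y\<bar>" for n
  proof (cases "y \<le> x")
    case True then show ?thesis using key[of y x n] x y by auto
  next
    case False then have "\<bar>u n y - u n x\<bar> \<le> B * \<bar>y - x\<bar>" using key[of x y n] x y by auto
    then show ?thesis by (simp add: abs_minus_commute)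
  qed
  ultimately show "\<bar>U x - U y\<bar> \<le> B * \<bar>x - y\<bar>"
    by (intro LIMSEQ_le_const2) auto
qed


lemma log_growth:
  fixes y y' :: "real \<Rightarrow> real"
  assumes C: "C > 0" and e: "\<epsilon> > 0" and d: "d \<ge> 0" and q0: "q0 \<ge> 0"
    and yc: "continuous_on {p..p+d} y"
    and yd: "\<And>t. t \<in> {p<..<p+d} \<Longrightarrow> (y has_real_derivative y' t) (at t)"
    and yb: "\<And>t. t \<in> {p<..<p+d} \<Longrightarrow> y' t \<ge> -C + q0 / (\<epsilon> + C * (t - p))"
    and yp: "y p \<ge> -\<epsilon>"
  shows "y (p + d) \<ge> -\<epsilon> - C * d + (q0 / C) * ln (1 + C * d / \<epsilon>)"
proof -
  define \<Phi> where "\<Phi> t = y t + \<epsilon> + C * (t - p) - (q0 / C) * ln (1 + C * (t - p) / \<epsilon>)" for t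
  have "\<Phi> p \<le> \<Phi> (p + d)"
  proof (rule DERIV_nonneg_imp_increasing_open[of p "p+d" \<Phi>])
    show "p \<le> p + d" using d by simp
  next
    fix t assume t: "p < t" "t < p + d"
    have pos: "1 + C * (t - p) / \<epsilon> > 0" using t C e by (simp add: add_pos_nonneg)
    have "(\<Phi> has_real_derivative (y' t + C - (q0 / C) * ((C / \<epsilon>) / (1 + C * (t - p) / \<epsilon>)))) (at t)"
      unfolding \<Phi>_def using yd[of t] t pos e C
      by (auto intro!: derivative_eq_intros)
    moreover have "(q0 / C) * ((C / \<epsilon>) / (1 + C * (t - p) / \<epsilon>)) = q0 / (\<epsilon> + C * (t - p))"
      using C e pos by (simp add: field_simps)
    moreover have "y' t \<ge> -C + q0 / (\<epsilon> + C * (t - p))" using yb t by auto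
    ultimately show "\<exists>z. (\<Phi> has_real_derivative z) (at t) \<and> 0 \<le> z" by (intro exI[of _ "y' t + C - (q0 / C) * ((C / \<epsilon>) / (1 + C * (t - p) / \<epsilon>))"]) auto
  next
    have hpos: "1 + C * (x - p) / \<epsilon> \<noteq> 0" if "p \<le> x" for x
    proof -
      have "1 + C * (x - p) / \<epsilon> > 0" using C e that by (simp add: add_pos_nonneg)
      then show ?thesis by simp
    qed
    show "continuous_on {p..p+d} \<Phi>" unfolding \<Phi>_def using yc e hpos by (intro continuous_intros) auto
  qed
  then show ?thesis using yp unfolding \<Phi>_def by simp
qed

lemma ln_large:
  fixes q0 C \<delta> R :: real
  assumes "q0 > 0" "C > 0" "\<delta> > 0"
  shows "\<exists>\<epsilon>0>0. \<epsilon>0 \<le> 1 \<and> (\<forall>\<epsilon>. 0 < \<epsilon> \<longrightarrow> \<epsilon> \<le> \<epsilon>0 \<longrightarrow> (q0 / C) * ln (1 + C * \<delta> / \<epsilon>) > R)"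
proof -
  define E where "E = exp (\<bar>R\<bar> * C / q0 + 1)"
  have E: "E > 0" unfolding E_def by simp
  define \<epsilon>0 where "\<epsilon>0 = min 1 (C * \<delta> / E)"
  have e0: "\<epsilon>0 > 0" unfolding \<epsilon>0_def using assms E by auto
  show ?thesis
  proof (intro exI conjI allI impI)
    show "\<epsilon>0 > 0" "\<epsilon>0 \<le> 1" using e0 by (auto simp: \<epsilon>0_def)
    fix \<epsilon> :: real assume e: "0 < \<epsilon>" "\<epsilon> \<le> \<epsilon>0"
    have "\<epsilon> \<le> C * \<delta> / E" using e by (simp add: \<epsilon>0_def)
    then have "E \<le> C * \<delta> / \<epsilon>" using e E assms by (simp add: field_simps)
    then have "E < 1 + C * \<delta> / \<epsilon>" by simp
    then have "ln E < ln (1 + C * \<delta> / \<epsilon>)" using E by (intro ln_less_cancel_iff[THEN iffD2]) auto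
    then have "\<bar>R\<bar> * C / q0 + 1 < ln (1 + C * \<delta> / \<epsilon>)" unfolding E_def by simp
    then have "\<bar>R\<bar> * C / q0 < ln (1 + C * \<delta> / \<epsilon>)" by simp
    then have "\<bar>R\<bar> < (q0 / C) * ln (1 + C * \<delta> / \<epsilon>)"
      using assms by (simp add: field_simps)
    then show "(q0 / C) * ln (1 + C * \<delta> / \<epsilon>) > R" by simp
  qed
qed

lemma lower_by_deriv:
  fixes y y' :: "real \<Rightarrow> real"
  assumes "a \<le> b" "continuous_on {a..b} y"
    and "\<And>t. t \<in> {a<..<b} \<Longrightarrow> (y has_real_derivative y' t) (at t)"
    and "\<And>t. t \<in> {a<..<b} \<Longrightarrow> y' t \<ge> -C"
  shows "y b \<ge> y a - C * (b - a)"
proof -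
  have "(\<lambda>t. y t + C * t) a \<le> (\<lambda>t. y t + C * t) b"
  proof (rule DERIV_nonneg_imp_increasing_open[of a b "\<lambda>t. y t + C * t"])
    fix t assume t: "a < t" "t < b"
    show "\<exists>z. ((\<lambda>t. y t + C * t) has_real_derivative z) (at t) \<and> 0 \<le> z"
      using assms(3)[of t] assms(4)[of t] t
      by (intro exI[of _ "y' t + C"]) (auto intro!: derivative_eq_intros)
  qed (use assms in \<open>auto intro!: continuous_intros\<close>)
  then show ?thesis by (simp add: algebra_simps)
qed

lemma neg_lemma:
  fixes y y' q :: "real \<Rightarrow> real"
  assumes C: "C > 0" and e: "\<epsilon> > 0" "\<epsilon> \<le> 1" and dl: "\<delta> > 0" and p: "0 \<le> p" "p + \<delta> \<le> 1"
    and qlo: "qlo > 0"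
    and big: "(qlo / C) * ln (1 + C * \<delta> / \<epsilon>) > 1 + C * \<delta> + C"
    and yc: "continuous_on {p..1} y"
    and yd: "\<And>t. t \<in> {p<..<1} \<Longrightarrow> (y has_real_derivative y' t) (at t)"
    and yb1: "\<And>t. t \<in> {p<..<1} \<Longrightarrow> y' t \<ge> -C"
    and yb2: "\<And>t. t \<in> {p<..<p+\<delta>} \<Longrightarrow> y' t \<ge> -C + q t / max (- y t) \<epsilon>"
    and qb: "\<And>t. t \<in> {p..p+\<delta>} \<Longrightarrow> q t \<ge> qlo"
    and y1: "y 1 \<le> 0"
  shows "y p < -\<epsilon>"
proof (rule ccontr)
  assume "\<not> y p < -\<epsilon>"
  then have yp: "y p \<ge> -\<epsilon>" by simp
  have low: "y t \<ge> -\<epsilon> - C * (t - p)" if t: "t \<in> {p..p+\<delta>}" for t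
  proof -
    have "y t \<ge> y p - C * (t - p)"
      by (rule lower_by_deriv[where y'=y']) (use t p yc yd yb1 in \<open>auto intro: continuous_on_subset\<close>)
    then show ?thesis using yp by simp
  qed
  have "y (p + \<delta>) \<ge> -\<epsilon> - C * \<delta> + (qlo / C) * ln (1 + C * \<delta> / \<epsilon>)"
  proof (rule log_growth[where y'=y'])
    fix t assume t: "t \<in> {p<..<p+\<delta>}"
    have m1: "max (- y t) \<epsilon> \<le> \<epsilon> + C * (t - p)" using low[of t] t C e by auto
    have m0: "max (- y t) \<epsilon> > 0" using e by auto
    have "qlo / (\<epsilon> + C * (t - p)) \<le> q t / max (- y t) \<epsilon>"
      using qb[of t] t qlo m0 m1 by (intro frac_le) auto
    then show "y' t \<ge> -C + qlo / (\<epsilon> + C * (t - p))" using yb2[OF t] by simp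
  qed (use C e dl qlo yp p yc yd in \<open>auto intro: continuous_on_subset\<close>)
  then have "y (p + \<delta>) > C" using big e by simp
  moreover have "y 1 \<ge> y (p + \<delta>) - C * (1 - (p + \<delta>))"
    by (rule lower_by_deriv[where y'=y']) (use p dl yc yd yb1 in \<open>auto intro: continuous_on_subset\<close>)
  ultimately have "y 1 > C - C * (1 - (p + \<delta>))" by simp
  moreover have "C * (1 - (p + \<delta>)) \<le> C" using C p dl by (simp add: mult_left_le)
  ultimately show False using y1 by simp
qed

lemma gronwall_zero:
  fixes w w' :: "real \<Rightarrow> real"
  assumes L: "L \<ge> 0" and wc: "continuous_on {a..b} w"
    and wd: "\<And>t. t \<in> {a<..<b} \<Longrightarrow> (w has_real_derivative w' t) (at t)"
    and wb: "\<And>t. t \<in> {a<..<b} \<Longrightarrow> \<bar>w' t\<bar> \<le> L * \<bar>w t\<bar>"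
    and p: "p \<in> {a..b}" "w p = 0"
    and t: "t \<in> {a..b}"
  shows "w t = 0"
proof (cases "p \<le> t")
  case True
  define V where "V s = (w s)\<^sup>2 * exp (- 2 * L * s)" for s
  have "V p \<ge> V t"
  proof (rule DERIV_nonpos_imp_decreasing_open[of p t V])
    fix s assume s: "p < s" "s < t"
    then have sab: "s \<in> {a<..<b}" using p t by auto
    have "w s * w' s \<le> L * (w s)\<^sup>2"
    proof -
      have "w s * w' s \<le> \<bar>w s\<bar> * \<bar>w' s\<bar>" by (metis abs_ge_self abs_mult)
      also have "\<dots> \<le> \<bar>w s\<bar> * (L * \<bar>w s\<bar>)" using wb[OF sab] by (intro mult_left_mono) auto
      finally show ?thesis by (simp add: power2_eq_square algebra_simps)
    qed
    then have "(2 * w s * w' s - 2 * L * (w s)\<^sup>2) * exp (- 2 * L * s) \<le> 0"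
      by (intro mult_nonpos_nonneg) auto
    moreover have "(V has_real_derivative (2 * w s * w' s - 2 * L * (w s)\<^sup>2) * exp (- 2 * L * s)) (at s)"
      unfolding V_def using wd[OF sab]
      by (auto intro!: derivative_eq_intros simp: algebra_simps)
    ultimately show "\<exists>z. (V has_real_derivative z) (at s) \<and> z \<le> 0" by blast
  next
    show "continuous_on {p..t} V" unfolding V_def
      using p t by (intro continuous_intros continuous_on_subset[OF wc]) auto
  qed (use True in auto)
  then have "V t \<le> 0" using p by (simp add: V_def)
  moreover have "V t \<ge> 0" unfolding V_def by simp
  ultimately have "V t = 0" by simp
  then show ?thesis unfolding V_def by simp
next
  case False
  define V where "V s = (w s)\<^sup>2 * exp (2 * L * s)" for s
  have "V t \<le> V p"
  proof (rule DERIV_nonneg_imp_increasing_open[of t p V])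
    fix s assume s: "t < s" "s < p"
    then have sab: "s \<in> {a<..<b}" using p t by auto
    have "- (w s * w' s) \<le> L * (w s)\<^sup>2"
    proof -
      have "- (w s * w' s) \<le> \<bar>w s\<bar> * \<bar>w' s\<bar>" by (metis abs_ge_minus_self abs_mult)
      also have "\<dots> \<le> \<bar>w s\<bar> * (L * \<bar>w s\<bar>)" using wb[OF sab] by (intro mult_left_mono) auto
      finally show ?thesis by (simp add: power2_eq_square algebra_simps)
    qed
    then have "(2 * w s * w' s + 2 * L * (w s)\<^sup>2) * exp (2 * L * s) \<ge> 0"
      by (intro mult_nonneg_nonneg) auto
    moreover have "(V has_real_derivative (2 * w s * w' s + 2 * L * (w s)\<^sup>2) * exp (2 * L * s)) (at s)"
      unfolding V_def using wd[OF sab]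
      by (auto intro!: derivative_eq_intros simp: algebra_simps)
    ultimately show "\<exists>z. (V has_real_derivative z) (at s) \<and> z \<ge> 0" by blast
  next
    show "continuous_on {t..p} V" unfolding V_def
      using p t by (intro continuous_intros continuous_on_subset[OF wc]) auto
  qed (use False in auto)
  then have "V t \<le> 0" using p by (simp add: V_def)
  moreover have "V t \<ge> 0" unfolding V_def by simp
  ultimately have "V t = 0" by simp
  then show ?thesis unfolding V_def by simp
qed


primrec iterF :: "(real \<Rightarrow> real \<Rightarrow> real) \<Rightarrow> real \<Rightarrow> real \<Rightarrow> nat \<Rightarrow> real \<Rightarrow> real" where
  "iterF F B a 0 = (\<lambda>x. a - B * x)"
| "iterF F B a (Suc n) = (\<lambda>x. a + integral {0..x} (\<lambda>s. F s (iterF F B a n s)))"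

definition fsol :: "(real \<Rightarrow> real \<Rightarrow> real) \<Rightarrow> real \<Rightarrow> real \<Rightarrow> real \<Rightarrow> real" where
  "fsol F B a x = (SUP n. iterF F B a n x)"

locale capF =
  fixes F :: "real \<Rightarrow> real \<Rightarrow> real" and B L :: real
  assumes Fc: "\<And>u. continuous_on {0..1} u \<Longrightarrow> continuous_on {0..1} (\<lambda>x. F x (u x))"
    and FB: "\<And>x y. x \<in> {0..1} \<Longrightarrow> \<bar>F x y\<bar> \<le> B"
    and Fm: "\<And>x y1 y2. x \<in> {0..1} \<Longrightarrow> y1 \<le> y2 \<Longrightarrow> F x y1 \<le> F x y2"
    and FL: "\<And>x y1 y2. x \<in> {0..1} \<Longrightarrow> \<bar>F x y1 - F x y2\<bar> \<le> L * \<bar>y1 - y2\<bar>"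
    and L0: "L \<ge> 0"
begin

lemma B0: "B \<ge> 0" using FB[of 0 0] by auto

lemma int_bounds:
  assumes "continuous_on {0..1} u" "x \<in> {0..1}"
  shows "\<bar>integral {0..x} (\<lambda>s. F s (u s))\<bar> \<le> B * x"
proof -
  have "norm (integral {0..x} (\<lambda>s. F s (u s))) \<le> B * (x - 0)"
    by (rule integral_bound) (use assms FB in \<open>auto intro: continuous_on_subset[OF Fc]\<close>)
  then show ?thesis by simp
qed

lemma int_cont:
  assumes "continuous_on {0..1} u"
  shows "continuous_on {0..1} (\<lambda>x. integral {0..x} (\<lambda>s. F s (u s)))"
  by (rule indefinite_integral_continuous_1, rule integrable_continuous_real, rule Fc[OF assms])

lemma iter_cont: "continuous_on {0..1} (iterF F B a n)"
proof (induction n)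
  case 0 then show ?case by (auto intro!: continuous_intros)
next
  case (Suc n) then show ?case using int_cont[OF Suc] by (auto intro!: continuous_intros)
qed

lemma iter_bounds:
  assumes x: "x \<in> {0..1}"
  shows "a - B * x \<le> iterF F B a n x \<and> iterF F B a n x \<le> a + B * x"
proof (cases n)
  case 0 then show ?thesis using B0 x by (auto simp: mult_nonneg_nonneg)
next
  case (Suc m)
  show ?thesis using int_bounds[OF iter_cont x, of a m] Suc by auto
qed

lemma iter_mono_a:
  assumes "a \<le> a'" "x \<in> {0..1}"
  shows "iterF F B a n x \<le> iterF F B a' n x"
  using assms(2)
proof (induction n arbitrary: x)
  case 0 then show ?case using assms by auto
next
  case (Suc n)
  have "integral {0..x} (\<lambda>s. F s (iterF F B a n s)) \<le> integral {0..x} (\<lambda>s. F s (iterF F B a' n s))"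
  proof (rule integral_le)
    show "(\<lambda>s. F s (iterF F B a n s)) integrable_on {0..x}"
      using Suc.prems by (intro integrable_continuous_real continuous_on_subset[OF Fc[OF iter_cont]]) auto
    show "(\<lambda>s. F s (iterF F B a' n s)) integrable_on {0..x}"
      using Suc.prems by (intro integrable_continuous_real continuous_on_subset[OF Fc[OF iter_cont]]) auto
  next
    fix s assume "s \<in> {0..x}"
    then show "F s (iterF F B a n s) \<le> F s (iterF F B a' n s)"
      using Suc.prems Suc.IH[of s] by (intro Fm) auto
  qed
  then show ?case using assms by simp
qed

lemma iter_inc:
  assumes "x \<in> {0..1}"
  shows "iterF F B a n x \<le> iterF F B a (Suc n) x"
  using assms
proof (induction n arbitrary: x)
  case 0 then show ?case using iter_bounds[OF 0, of a 1] by auto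
next
  case (Suc n)
  have "integral {0..x} (\<lambda>s. F s (iterF F B a n s)) \<le> integral {0..x} (\<lambda>s. F s (iterF F B a (Suc n) s))"
  proof (rule integral_le)
    show "(\<lambda>s. F s (iterF F B a n s)) integrable_on {0..x}"
      using Suc.prems by (intro integrable_continuous_real continuous_on_subset[OF Fc[OF iter_cont]]) auto
    show "(\<lambda>s. F s (iterF F B a (Suc n) s)) integrable_on {0..x}"
      using Suc.prems by (intro integrable_continuous_real continuous_on_subset[OF Fc[OF iter_cont]]) auto
  next
    fix s assume "s \<in> {0..x}"
    then show "F s (iterF F B a n s) \<le> F s (iterF F B a (Suc n) s)"
      using Suc.prems Suc.IH[of s] by (intro Fm) auto
  qed
  then show ?case by simp
qed

end


lemma lip_cont:
  fixes U :: "real \<Rightarrow> real"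
  assumes "\<And>x y. x \<in> S \<Longrightarrow> y \<in> S \<Longrightarrow> \<bar>U x - U y\<bar> \<le> B * \<bar>x - y\<bar>" "B \<ge> 0"
  shows "continuous_on S U"
  unfolding continuous_on_iff
proof (intro ballI allI impI)
  fix x e :: real assume x: "x \<in> S" and e: "0 < e"
  show "\<exists>d>0. \<forall>x'\<in>S. dist x' x < d \<longrightarrow> dist (U x') (U x) < e"
  proof (intro exI[of _ "e / (B + 1)"] conjI ballI impI)
    show "e / (B + 1) > 0" using e assms by auto
    fix x' assume x': "x' \<in> S" and d: "dist x' x < e / (B + 1)"
    have "dist (U x') (U x) \<le> B * dist x' x" using assms(1)[OF x' x] by (simp add: dist_real_def)
    also have "\<dots> \<le> (B + 1) * dist x' x" by (simp add: mult_right_mono)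
    also have "\<dots> < (B + 1) * (e / (B + 1))" using d assms by (intro mult_strict_left_mono) auto
    also have "\<dots> = e" using assms by simp
    finally show "dist (U x') (U x) < e" .
  qed
qed

context capF
begin

lemma fsol_lim:
  assumes x: "x \<in> {0..1}"
  shows "(\<lambda>n. iterF F B a n x) \<longlonglongrightarrow> fsol F B a x"
  unfolding fsol_def
proof (rule LIMSEQ_incseq_SUP)
  show "bdd_above (range (\<lambda>n. iterF F B a n x))"
    using iter_bounds[OF x] by (intro bdd_aboveI[of _ "a + B * x"]) auto
  show "incseq (\<lambda>n. iterF F B a n x)"
    using iter_inc[OF x] by (intro incseq_SucI) auto
qed

lemma F_tendsto:
  assumes s: "s \<in> {0..1}" and lim: "(\<lambda>n. X n) \<longlonglongrightarrow> l"
  shows "(\<lambda>n. F s (X n)) \<longlonglongrightarrow> F s l"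
proof -
  have "(\<lambda>n. L * \<bar>X n - l\<bar>) \<longlonglongrightarrow> L * \<bar>l - l\<bar>"
    using lim by (intro tendsto_intros)
  then have z: "(\<lambda>n. L * \<bar>X n - l\<bar>) \<longlonglongrightarrow> 0" by simp
  have "(\<lambda>n. F s (X n) - F s l) \<longlonglongrightarrow> 0"
    by (rule Lim_null_comparison[OF _ z]) (use FL[OF s] in auto)
  then have "(\<lambda>n. F s (X n) - F s l + F s l) \<longlonglongrightarrow> 0 + F s l"
    by (intro tendsto_add) auto
  then show ?thesis by simp
qed

lemma fsol_props:
  shows "\<And>x. x \<in> {0..1} \<Longrightarrow> fsol F B a x = a + integral {0..x} (\<lambda>s. F s (fsol F B a s))"
    and "continuous_on {0..1} (fsol F B a)"
proof -
  have a0: "fsol F B a 0 = a"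
  proof -
    have "(\<lambda>n. iterF F B a n 0) \<longlonglongrightarrow> fsol F B a 0" using fsol_lim[of 0] by auto
    moreover have "iterF F B a n 0 = a" for n by (cases n) auto
    ultimately show ?thesis by (simp add: LIMSEQ_const_iff)
  qed
  note G = genlim[where a=0 and b=1 and u="\<lambda>n. iterF F B a (Suc n)" and k="\<lambda>n s. F s (iterF F B a n s)"
      and B=B and U="fsol F B a" and K="\<lambda>s. F s (fsol F B a s)"]
  have h1: "\<And>n x. x \<in> {0..1} \<Longrightarrow> iterF F B a (Suc n) x = iterF F B a (Suc n) 0 + integral {0..x} (\<lambda>s. F s (iterF F B a n s))"
    by simp
  have h2: "\<And>n. continuous_on {0..1} (\<lambda>s. F s (iterF F B a n s))" by (rule Fc[OF iter_cont])
  have h3: "\<And>n x. x \<in> {0..1} \<Longrightarrow> \<bar>F x (iterF F B a n x)\<bar> \<le> B" by (rule FB)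
  have h4: "\<And>x. x \<in> {0..1} \<Longrightarrow> (\<lambda>n. iterF F B a (Suc n) x) \<longlonglongrightarrow> fsol F B a x"
    using fsol_lim by (rule LIMSEQ_Suc)
  have h5: "\<And>x. x \<in> {0..1} \<Longrightarrow> (\<lambda>n. F x (iterF F B a n x)) \<longlonglongrightarrow> F x (fsol F B a x)"
    using fsol_lim F_tendsto by blast
  note G1 = G(1)[OF _ h1 h2 h3 h4 h5] and G2 = G(2)[OF _ h1 h2 h3 h4 h5]
  show "\<And>x. x \<in> {0..1} \<Longrightarrow> fsol F B a x = a + integral {0..x} (\<lambda>s. F s (fsol F B a s))"
    using G1 a0 by auto
  show "continuous_on {0..1} (fsol F B a)"
    by (rule lip_cont[OF _ B0]) (use G2 in auto)
qed

lemma fsol_deriv: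
  assumes "x \<in> {0<..<1}"
  shows "(fsol F B a has_real_derivative F x (fsol F B a x)) (at x)"
proof (rule deriv_from_integral[where a=0 and b=1])
  show "continuous_on {0..1} (\<lambda>s. F s (fsol F B a s))" by (rule Fc[OF fsol_props(2)])
  fix y :: real assume "y \<in> {0..1}"
  then show "fsol F B a y = fsol F B a 0 + integral {0..y} (\<lambda>s. F s (fsol F B a s))"
    using fsol_props(1)[of y] fsol_props(1)[of 0] by simp
qed (use assms in auto)

lemma fsol_mono:
  assumes "a \<le> a'" "x \<in> {0..1}"
  shows "fsol F B a x \<le> fsol F B a' x"
  by (rule LIMSEQ_le[OF fsol_lim[OF assms(2)] fsol_lim[OF assms(2)]]) (use iter_mono_a[OF assms] in auto)

lemma fsol_bounds:
  assumes x: "x \<in> {0..1}"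
  shows "a - B * x \<le> fsol F B a x" "fsol F B a x \<le> a + B * x"
proof -
  show "a - B * x \<le> fsol F B a x"
    by (rule LIMSEQ_le_const[OF fsol_lim[OF x]]) (use iter_bounds[OF x] in auto)
  show "fsol F B a x \<le> a + B * x"
    by (rule LIMSEQ_le_const2[OF fsol_lim[OF x]]) (use iter_bounds[OF x] in auto)
qed

lemma fsol_lip_a:
  assumes "a \<le> a'"
  shows "fsol F B a' 1 - fsol F B a 1 \<le> (a' - a) * exp L"
proof -
  define w where "w t = fsol F B a' t - fsol F B a t" for t
  define V where "V t = w t * exp (- L * t)" for t
  have w0: "w 0 = a' - a" unfolding w_def using fsol_props(1)[of 0 a] fsol_props(1)[of 0 a'] by simp
  have "V 1 \<le> V 0"
  proof (rule DERIV_nonpos_imp_decreasing_open[of 0 1 V])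
    fix t :: real assume t: "0 < t" "t < 1"
    then have t01: "t \<in> {0..1}" "t \<in> {0<..<1}" by auto
    have wpos: "w t \<ge> 0" unfolding w_def using fsol_mono[OF assms t01(1)] by simp
    have "F t (fsol F B a' t) - F t (fsol F B a t) \<le> L * w t"
      using FL[OF t01(1), of "fsol F B a' t" "fsol F B a t"] wpos unfolding w_def by auto
    then have le: "(F t (fsol F B a' t) - F t (fsol F B a t) - L * w t) * exp (- L * t) \<le> 0"
      by (intro mult_nonpos_nonneg) auto
    have "(V has_real_derivative (F t (fsol F B a' t) - F t (fsol F B a t) - L * w t) * exp (- L * t)) (at t)"
      unfolding V_def w_def using fsol_deriv[OF t01(2), of a] fsol_deriv[OF t01(2), of a']
      by (auto intro!: derivative_eq_intros simp: algebra_simps)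
    then show "\<exists>z. (V has_real_derivative z) (at t) \<and> z \<le> 0" using le by blast
  next
    show "continuous_on {0..1} V" unfolding V_def w_def
      by (intro continuous_intros fsol_props(2))
  qed auto
  then have "w 1 * exp (- L) \<le> a' - a" unfolding V_def using w0 by simp
  then have "w 1 \<le> (a' - a) * exp L"
    by (simp add: exp_minus field_simps)
  then show ?thesis unfolding w_def .
qed

lemma cap_exists:
  "\<exists>z. continuous_on {0..1} z \<and> (\<forall>x\<in>{0<..<1}. (z has_real_derivative F x (z x)) (at x)) \<and> z 1 = v"
proof -
  define g where "g a = fsol F B a 1" for a
  have gc: "continuous_on {v - B .. v + B} g"
  proof (rule lip_cont[where B="exp L"])
    fix x y :: real assume "x \<in> {v - B .. v + B}" "y \<in> {v - B .. v + B}"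
    show "\<bar>g x - g y\<bar> \<le> exp L * \<bar>x - y\<bar>"
    proof (cases "x \<le> y")
      case True
      then show ?thesis using fsol_lip_a[OF True] fsol_mono[OF True, of 1] unfolding g_def
        by (simp add: abs_if algebra_simps)
    next
      case False
      then have yx: "y \<le> x" by simp
      then show ?thesis using fsol_lip_a[OF yx] fsol_mono[OF yx, of 1] unfolding g_def
        by (simp add: abs_if algebra_simps)
    qed
  qed simp
  have "g (v - B) \<le> v" using fsol_bounds(2)[of 1 "v - B"] unfolding g_def by simp
  moreover have "v \<le> g (v + B)" using fsol_bounds(1)[of 1 "v + B"] unfolding g_def by simp
  ultimately obtain a where "g a = v" using IVT'[of g "v - B" v "v + B", OF _ _ _ gc] B0 by auto
  then show ?thesis using fsol_props(2)[of a] fsol_deriv[of _ a] unfolding g_def by blast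
qed

end


lemma inv_lip:
  fixes a b e Q :: real
  assumes "a \<le> -e" "b \<le> -e" "e > 0" "Q \<ge> 0"
  shows "\<bar>Q / a - Q / b\<bar> \<le> Q / e\<^sup>2 * \<bar>a - b\<bar>"
proof -
  have a0: "a < 0" "b < 0" using assms by auto
  have "Q / a - Q / b = Q * (b - a) / (a * b)" using a0 by (simp add: field_simps)
  then have "\<bar>Q / a - Q / b\<bar> = Q * \<bar>a - b\<bar> / (a * b)"
    using a0 assms by (simp add: abs_mult abs_minus_commute zero_less_mult_iff)
  also have "\<dots> \<le> Q * \<bar>a - b\<bar> / e\<^sup>2"
  proof (rule divide_left_mono)
    have "e * e \<le> (-a) * (-b)" using assms by (intro mult_mono) auto
    then show "e\<^sup>2 \<le> a * b" by (simp add: power2_eq_square)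
  next
    have "a * b > 0" using a0 by (simp add: mult_neg_neg)
    then show "0 < a * b * e\<^sup>2" using assms by simp
  qed (use assms in auto)
  finally show ?thesis by simp
qed

lemma bounded_cont:
  fixes f :: "real \<Rightarrow> real"
  assumes "continuous_on {0..1} f"
  shows "\<exists>H. \<forall>x\<in>{0..1}. \<bar>f x\<bar> \<le> H"
proof -
  have "compact (f ` {0..1})" by (rule compact_continuous_image[OF assms]) simp
  then have "bounded (f ` {0..1})" by (rule compact_imp_bounded)
  then show ?thesis by (auto simp: bounded_real)
qed

locale prob =
  fixes h q :: "real \<Rightarrow> real"
  assumes hc: "continuous_on {0..1} h" and qc: "continuous_on {0..1} q"
    and qpos: "\<And>x. x \<in> {0<..<1} \<Longrightarrow> q x > 0" and q0: "q 0 = 0" and q1: "q 1 = 0"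
begin

lemma qnn: "x \<in> {0..1} \<Longrightarrow> q x \<ge> 0"
  using qpos[of x] q0 q1 by (cases "x = 0 \<or> x = 1") auto

definition "Hm = (SOME H. \<forall>x\<in>{0..1}. \<bar>h x\<bar> \<le> H)"
definition "Qm = (SOME H. \<forall>x\<in>{0..1}. \<bar>q x\<bar> \<le> H)"

lemma Hm: "x \<in> {0..1} \<Longrightarrow> \<bar>h x\<bar> \<le> Hm"
  using someI_ex[OF bounded_cont[OF hc]] unfolding Hm_def by blast

lemma Qm: "x \<in> {0..1} \<Longrightarrow> q x \<le> Qm"
  using someI_ex[OF bounded_cont[OF qc]] unfolding Qm_def by fastforce

lemma Qm_pos: "Qm > 0"
  using Qm[of "1/2"] qpos[of "1/2"] by auto

lemma Hm_nn: "Hm \<ge> 0" using Hm[of 0] by auto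

definition Fe :: "real \<Rightarrow> real \<Rightarrow> real \<Rightarrow> real \<Rightarrow> real" where
  "Fe c \<epsilon> x y = h x - c - q x / min y (-\<epsilon>)"

lemma capF_inst:
  assumes e: "\<epsilon> > 0"
  shows "capF (Fe c \<epsilon>) (Hm + \<bar>c\<bar> + Qm / \<epsilon>) (Qm / \<epsilon>\<^sup>2)"
proof
  fix u :: "real \<Rightarrow> real" assume u: "continuous_on {0..1} u"
  show "continuous_on {0..1} (\<lambda>x. Fe c \<epsilon> x (u x))"
    unfolding Fe_def using e by (intro continuous_intros hc qc u) auto
next
  fix x y :: real assume x: "x \<in> {0..1}"
  have m: "min y (-\<epsilon>) \<le> -\<epsilon>" by simp
  have "\<bar>q x / min y (-\<epsilon>)\<bar> = q x / \<bar>min y (-\<epsilon>)\<bar>" using qnn[OF x] by (simp add: abs_div_pos)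
  also have "\<dots> \<le> Qm / \<epsilon>"
    using qnn[OF x] Qm[OF x] e m by (intro frac_le) auto
  finally have "\<bar>q x / min y (-\<epsilon>)\<bar> \<le> Qm / \<epsilon>" .
  then have t: "- (Qm / \<epsilon>) \<le> q x / min y (-\<epsilon>) \<and> q x / min y (-\<epsilon>) \<le> Qm / \<epsilon>"
    by (simp only: abs_le_iff) auto
  have hh: "- Hm \<le> h x \<and> h x \<le> Hm" using Hm[OF x] by (simp only: abs_le_iff) auto
  have cc: "- \<bar>c\<bar> \<le> c \<and> c \<le> \<bar>c::real\<bar>" by auto
  show "\<bar>Fe c \<epsilon> x y\<bar> \<le> Hm + \<bar>c\<bar> + Qm / \<epsilon>"
    unfolding Fe_def abs_le_iff using t hh cc by linarith
next
  fix x y1 y2 :: real assume x: "x \<in> {0..1}" and y: "y1 \<le> y2"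
  have "inverse (min y2 (-\<epsilon>)) \<le> inverse (min y1 (-\<epsilon>))"
    using y e by (intro le_imp_inverse_le_neg) auto
  then have "q x * inverse (min y2 (-\<epsilon>)) \<le> q x * inverse (min y1 (-\<epsilon>))"
    using qnn[OF x] by (intro mult_left_mono) auto
  then have "q x / min y2 (-\<epsilon>) \<le> q x / min y1 (-\<epsilon>)" by (simp add: divide_inverse)
  then show "Fe c \<epsilon> x y1 \<le> Fe c \<epsilon> x y2" unfolding Fe_def by simp
next
  fix x y1 y2 :: real assume x: "x \<in> {0..1}"
  have "\<bar>q x / min y2 (-\<epsilon>) - q x / min y1 (-\<epsilon>)\<bar> \<le> q x / \<epsilon>\<^sup>2 * \<bar>min y2 (-\<epsilon>) - min y1 (-\<epsilon>)\<bar>"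
    by (rule inv_lip) (use e qnn[OF x] in auto)
  also have "\<dots> \<le> Qm / \<epsilon>\<^sup>2 * \<bar>y1 - y2\<bar>"
  proof (rule mult_mono)
    show "q x / \<epsilon>\<^sup>2 \<le> Qm / \<epsilon>\<^sup>2" using Qm[OF x] e by (simp add: divide_right_mono)
    show "\<bar>min y2 (-\<epsilon>) - min y1 (-\<epsilon>)\<bar> \<le> \<bar>y1 - y2\<bar>" by (auto simp: min_def)
  qed (use Qm_pos e in auto)
  finally show "\<bar>Fe c \<epsilon> x y1 - Fe c \<epsilon> x y2\<bar> \<le> Qm / \<epsilon>\<^sup>2 * \<bar>y1 - y2\<bar>"
    unfolding Fe_def by (simp add: abs_minus_commute)
next
  show "0 \<le> Qm / \<epsilon>\<^sup>2" using Qm_pos by simp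
qed

end


lemma stay_pos:
  fixes v v' :: "real \<Rightarrow> real"
  assumes ab: "a \<le> b" and vc: "continuous_on {a..b} v"
    and vd: "\<And>t. t \<in> {a<..<b} \<Longrightarrow> (v has_real_derivative v' t) (at t)"
    and vp: "\<And>t. t \<in> {a<..<b} \<Longrightarrow> v t > 0 \<Longrightarrow> v' t \<ge> 0"
    and va: "v a > 0"
  shows "v b \<ge> v a"
proof -
  have pos: "v t > v a / 2" if t: "t \<in> {a..b}" for t
  proof (rule ccontr)
    assume "\<not> v t > v a / 2"
    define S where "S = {t \<in> {a..b}. v t \<le> v a / 2}"
    have tS: "t \<in> S" using t \<open>\<not> v t > v a / 2\<close> unfolding S_def by auto
    have cS: "closed S" unfolding S_def by (intro continuous_on_closed_Collect_le vc continuous_intros) auto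
    have bS: "bdd_below S" unfolding S_def by (auto intro: bdd_belowI[of _ a])
    define s where "s = Inf S"
    have sS: "s \<in> S" unfolding s_def using closed_contains_Inf[OF _ bS cS] tS by auto
    have sa: "s > a"
    proof -
      have "s \<ge> a" using sS unfolding S_def by auto
      moreover have "s \<noteq> a" using sS va unfolding S_def by auto
      ultimately show ?thesis by simp
    qed
    have notS: "v u > v a / 2" if "u \<in> {a..<s}" for u
    proof -
      have "u \<notin> S" using that cInf_lower[OF _ bS, of u] unfolding s_def by force
      then show ?thesis using that sS unfolding S_def by auto
    qed
    have "v a \<le> v s"
    proof (rule DERIV_nonneg_imp_increasing_open[of a s v])
      fix u assume u: "a < u" "u < s"
      have ub: "u \<in> {a<..<b}" using u sS unfolding S_def by auto
      have "v u > 0" using notS[of u] u va by auto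
      then show "\<exists>y. (v has_real_derivative y) (at u) \<and> 0 \<le> y" using vd[OF ub] vp[OF ub] by blast
    next
      show "continuous_on {a..s} v" using sS unfolding S_def by (auto intro: continuous_on_subset[OF vc])
    qed (use sa in auto)
    then show False using sS va unfolding S_def by auto
  qed
  show ?thesis
  proof (rule DERIV_nonneg_imp_increasing_open[of a b v])
    fix u assume u: "a < u" "u < b"
    then have ub: "u \<in> {a<..<b}" by auto
    have "v u > 0" using pos[of u] u va by auto
    then show "\<exists>y. (v has_real_derivative y) (at u) \<and> 0 \<le> y" using vd[OF ub] vp[OF ub] by blast
  qed (use ab vc in auto)
qed

lemma stay_pos_back:
  fixes v v' :: "real \<Rightarrow> real"
  assumes ab: "a \<le> b" and vc: "continuous_on {a..b} v"
    and vd: "\<And>t. t \<in> {a<..<b} \<Longrightarrow> (v has_real_derivative v' t) (at t)"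
    and vp: "\<And>t. t \<in> {a<..<b} \<Longrightarrow> v t > 0 \<Longrightarrow> v' t \<le> 0"
    and vb: "v b > 0"
  shows "v a \<ge> v b"
proof -
  have pos: "v t > v b / 2" if t: "t \<in> {a..b}" for t
  proof (rule ccontr)
    assume "\<not> v t > v b / 2"
    define S where "S = {t \<in> {a..b}. v t \<le> v b / 2}"
    have tS: "t \<in> S" using t \<open>\<not> v t > v b / 2\<close> unfolding S_def by auto
    have cS: "closed S" unfolding S_def by (intro continuous_on_closed_Collect_le vc continuous_intros) auto
    have bS: "bdd_above S" unfolding S_def by (auto intro: bdd_aboveI[of _ b])
    define s where "s = Sup S"
    have sS: "s \<in> S" unfolding s_def using closed_contains_Sup[OF _ bS cS] tS by auto
    have sb: "s < b"
    proof -
      have "s \<le> b" using sS unfolding S_def by auto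
      moreover have "s \<noteq> b" using sS vb unfolding S_def by auto
      ultimately show ?thesis by simp
    qed
    have notS: "v u > v b / 2" if "u \<in> {s<..b}" for u
    proof -
      have "u \<notin> S" using that cSup_upper[OF _ bS, of u] unfolding s_def by force
      then show ?thesis using that sS unfolding S_def by auto
    qed
    have "v s \<ge> v b"
    proof (rule DERIV_nonpos_imp_decreasing_open[of s b v])
      fix u assume u: "s < u" "u < b"
      have ub: "u \<in> {a<..<b}" using u sS unfolding S_def by auto
      have "v u > 0" using notS[of u] u vb by auto
      then show "\<exists>y. (v has_real_derivative y) (at u) \<and> y \<le> 0" using vd[OF ub] vp[OF ub] by blast
    next
      show "continuous_on {s..b} v" using sS unfolding S_def by (auto intro: continuous_on_subset[OF vc])
    qed (use sb in auto)
    then show False using sS vb unfolding S_def by auto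
  qed
  show ?thesis
  proof (rule DERIV_nonpos_imp_decreasing_open[of a b v])
    fix u assume u: "a < u" "u < b"
    then have ub: "u \<in> {a<..<b}" by auto
    have "v u > 0" using pos[of u] u vb by auto
    then show "\<exists>y. (v has_real_derivative y) (at u) \<and> y \<le> 0" using vd[OF ub] vp[OF ub] by blast
  qed (use ab vc in auto)
qed

lemma barrier_lemma:
  fixes w w' :: "real \<Rightarrow> real"
  assumes ab: "a \<le> b" and wc: "continuous_on {a..b} w"
    and wd: "\<And>t. t \<in> {a<..<b} \<Longrightarrow> (w has_real_derivative w' t) (at t)"
    and wp: "\<And>t. t \<in> {a<..<b} \<Longrightarrow> w t > 0 \<Longrightarrow> w' t \<le> L * w t"
    and wb: "w b > 0"
  shows "w a > 0"
proof -
  define V where "V t = w t * exp (- L * t)" for t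
  have "V a \<ge> V b"
  proof (rule stay_pos_back[where v=V and v'="\<lambda>t. (w' t - L * w t) * exp (- L * t)"])
    show "continuous_on {a..b} V" unfolding V_def by (intro continuous_intros wc)
  next
    fix t assume t: "t \<in> {a<..<b}"
    show "(V has_real_derivative (w' t - L * w t) * exp (- L * t)) (at t)"
      unfolding V_def using wd[OF t] by (auto intro!: derivative_eq_intros simp: algebra_simps)
    assume "V t > 0"
    then have "w t > 0" unfolding V_def by (simp add: zero_less_mult_iff)
    then show "(w' t - L * w t) * exp (- L * t) \<le> 0" using wp[OF t] by (intro mult_nonpos_nonneg) auto
  next
    show "V b > 0" unfolding V_def using wb by simp
  qed (use ab in auto)
  then have "V a > 0" using wb unfolding V_def by (smt (verit) exp_gt_zero mult_pos_pos)
  then show ?thesis unfolding V_def by (simp add: zero_less_mult_iff)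
qed

lemma squeeze0:
  fixes z \<beta> :: "real \<Rightarrow> real"
  assumes bc: "continuous_on {0..1} \<beta>" and b0: "\<beta> 0 = 0" and z0: "z 0 = 0"
    and le: "\<And>x. x \<in> {0<..1} \<Longrightarrow> \<beta> x \<le> z x \<and> z x \<le> 0"
  shows "continuous (at 0 within {0..1}) z"
proof -
  have "(\<beta> \<longlongrightarrow> 0) (at 0 within {0..1})"
    using bc b0 unfolding continuous_on_def by (metis atLeastAtMost_iff order_refl zero_le_one)
  moreover have "((\<lambda>_. 0::real) \<longlongrightarrow> 0) (at 0 within {0..1})" by simp
  moreover have "eventually (\<lambda>x. \<beta> x \<le> z x) (at 0 within {0..1})"
    unfolding eventually_at_filter by (intro always_eventually) (use le in auto)
  moreover have "eventually (\<lambda>x. z x \<le> 0) (at 0 within {0..1})"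
    unfolding eventually_at_filter by (intro always_eventually) (use le in auto)
  ultimately have "(z \<longlongrightarrow> 0) (at 0 within {0..1})"
    by (intro tendsto_sandwich[of \<beta> z _ "\<lambda>_. 0"]) auto
  then show ?thesis using z0 by (simp add: continuous_within)
qed


context prob
begin

lemma solP_intro:
  assumes zc: "continuous_on {0..1} z" and z0: "z 0 = 0"
    and zn: "\<And>x. x \<in> {0<..<1} \<Longrightarrow> z x < 0"
    and zd: "\<And>x. x \<in> {0<..<1} \<Longrightarrow> (z has_real_derivative h x - c - q x / z x) (at x)"
  shows "solP h q c z"
  unfolding solP_def
proof (intro conjI ballI)
  have "continuous_on {0<..<1} (\<lambda>x. h x - c - q x / z x)"
  proof (intro continuous_intros)
    show "continuous_on {0<..<1} h" by (rule continuous_on_subset[OF hc]) auto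
    show "continuous_on {0<..<1} q" by (rule continuous_on_subset[OF qc]) auto
    show "continuous_on {0<..<1} z" by (rule continuous_on_subset[OF zc]) auto
  qed (use zn in fastforce)
  then show "continuous_on {0<..<1} (deriv z)"
    by (rule continuous_on_eq) (use zd in \<open>auto intro: DERIV_imp_deriv[symmetric]\<close>)
qed (use assms in auto)

lemma compare:
  assumes c12: "c1 \<le> c2"
    and z1c: "continuous_on {0..1} z1" and z2c: "continuous_on {0..1} z2"
    and z1d: "\<And>x. x \<in> {0<..<1} \<Longrightarrow> (z1 has_real_derivative h x - c1 - q x / z1 x) (at x)"
    and z2d: "\<And>x. x \<in> {0<..<1} \<Longrightarrow> (z2 has_real_derivative h x - c2 - q x / z2 x) (at x)"
    and z1n: "\<And>x. x \<in> {0<..<1} \<Longrightarrow> z1 x < 0" and z2n: "\<And>x. x \<in> {0<..<1} \<Longrightarrow> z2 x < 0"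
    and t: "t \<in> {0<..<1}" and gt: "z1 t > z2 t"
  shows "z1 1 - z2 1 \<ge> z1 t - z2 t"
proof -
  have "(\<lambda>x. z1 x - z2 x) t \<le> (\<lambda>x. z1 x - z2 x) 1"
  proof (rule stay_pos[where v="\<lambda>x. z1 x - z2 x" and v'="\<lambda>x. (h x - c1 - q x / z1 x) - (h x - c2 - q x / z2 x)"])
    show "t \<le> 1" using t by auto
    show "continuous_on {t..1} (\<lambda>x. z1 x - z2 x)" using t
      by (intro continuous_intros continuous_on_subset[OF z1c] continuous_on_subset[OF z2c]) auto
  next
    fix x assume x: "x \<in> {t<..<1}"
    then have x01: "x \<in> {0<..<1}" using t by auto
    show "((\<lambda>x. z1 x - z2 x) has_real_derivative (h x - c1 - q x / z1 x) - (h x - c2 - q x / z2 x)) (at x)"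
      using z1d[OF x01] z2d[OF x01] by (rule DERIV_diff)
    assume pos: "z1 x - z2 x > 0"
    have "inverse (z1 x) \<le> inverse (z2 x)" using pos z1n[OF x01] by (intro le_imp_inverse_le_neg) auto
    then have "q x * inverse (z1 x) \<le> q x * inverse (z2 x)" using qnn[of x] x01 by (intro mult_left_mono) auto
    then show "0 \<le> (h x - c1 - q x / z1 x) - (h x - c2 - q x / z2 x)"
      using c12 by (simp add: divide_inverse)
  next
    show "(\<lambda>x. z1 x - z2 x) t > 0" using gt by simp
  qed
  then show ?thesis by simp
qed

lemma Fe_ge: "x \<in> {0..1} \<Longrightarrow> \<epsilon> > 0 \<Longrightarrow> Fe c \<epsilon> x y \<ge> -(Hm + \<bar>c\<bar> + 1)"
proof -
  assume x: "x \<in> {0..1}" and e: "\<epsilon> > 0"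
  have "q x / min y (-\<epsilon>) \<le> 0" using qnn[OF x] e by (intro divide_nonneg_neg) auto
  moreover have "- Hm \<le> h x" using Hm[OF x] by auto
  moreover have "c \<le> \<bar>c\<bar>" by simp
  ultimately show ?thesis unfolding Fe_def by linarith
qed

lemma Fe_alt: "Fe c \<epsilon> x y = h x - c + q x / max (- y) \<epsilon>"
proof -
  have "min y (-\<epsilon>) = - max (- y) \<epsilon>" by (auto simp: min_def max_def)
  then show ?thesis unfolding Fe_def by simp
qed

lemma Fe_true: "y \<le> -\<epsilon> \<Longrightarrow> Fe c \<epsilon> x y = h x - c - q x / y"
  unfolding Fe_def by (simp add: min_def)

lemma Fe_le_true:
  assumes "y < 0" "x \<in> {0..1}"
  shows "Fe c \<epsilon> x y \<le> h x - c - q x / y"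
proof -
  have "inverse y \<le> inverse (min y (-\<epsilon>))" using assms by (intro le_imp_inverse_le_neg) auto
  then have "q x * inverse y \<le> q x * inverse (min y (-\<epsilon>))" using qnn[OF assms(2)] by (intro mult_left_mono) auto
  then show ?thesis unfolding Fe_def by (simp add: divide_inverse)
qed

definition ycap :: "real \<Rightarrow> real \<Rightarrow> real \<Rightarrow> real \<Rightarrow> real" where
  "ycap c \<epsilon> m = (SOME z. continuous_on {0..1} z \<and> (\<forall>x\<in>{0<..<1}. (z has_real_derivative Fe c \<epsilon> x (z x)) (at x)) \<and> z 1 = -m)"

lemma ycap:
  assumes "\<epsilon> > 0"
  shows "continuous_on {0..1} (ycap c \<epsilon> m)"
    and "\<And>x. x \<in> {0<..<1} \<Longrightarrow> (ycap c \<epsilon> m has_real_derivative Fe c \<epsilon> x (ycap c \<epsilon> m x)) (at x)"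
    and "ycap c \<epsilon> m 1 = -m"
  using someI_ex[OF capF.cap_exists[OF capF_inst[OF assms], of c "-m"]] unfolding ycap_def by auto

lemma ycap_neg:
  assumes phi: "\<phi> \<in> {0<..<1}" and m: "m > 0"
  shows "\<exists>\<epsilon>0>0. \<forall>\<epsilon>. 0 < \<epsilon> \<longrightarrow> \<epsilon> \<le> \<epsilon>0 \<longrightarrow> (\<forall>t\<in>{\<phi>..1}. ycap c \<epsilon> m t < -\<epsilon>)"
proof -
  define C where "C = Hm + \<bar>c\<bar> + 1"
  have C: "C > 0" using Hm_nn by (simp add: C_def add_nonneg_pos)
  define \<delta> where "\<delta> = min (m / (4 * C)) ((1 - \<phi>) / 3)"
  have dl: "\<delta> > 0" using m C phi by (auto simp: \<delta>_def)
  have d1: "\<delta> \<le> (1 - \<phi>) / 3" "\<delta> \<le> m / (4 * C)" unfolding \<delta>_def by (rule min.cobounded2, rule min.cobounded1)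
  obtain s where s: "s \<in> {\<phi>..1-\<delta>}" "\<forall>t\<in>{\<phi>..1-\<delta>}. q s \<le> q t"
    using continuous_attains_inf[OF compact_Icc _ continuous_on_subset[OF qc, of "{\<phi>..1-\<delta>}"]] d1 dl phi
    by auto
  define q0 where "q0 = q s"
  have q0: "q0 > 0" unfolding q0_def using s phi dl by (intro qpos) auto
  obtain \<epsilon>1 where e1: "\<epsilon>1 > 0" "\<epsilon>1 \<le> 1"
    "\<forall>\<epsilon>. 0 < \<epsilon> \<longrightarrow> \<epsilon> \<le> \<epsilon>1 \<longrightarrow> (q0 / C) * ln (1 + C * \<delta> / \<epsilon>) > 1 + C * \<delta> + C"
    using ln_large[OF q0 C dl, of "1 + C * \<delta> + C"] by auto
  show ?thesis
  proof (intro exI[of _ "min \<epsilon>1 (m / 4)"] conjI allI impI ballI)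
    show "min \<epsilon>1 (m / 4) > 0" using e1 m by auto
    fix \<epsilon> t assume e: "0 < \<epsilon>" "\<epsilon> \<le> min \<epsilon>1 (m / 4)" and t: "t \<in> {\<phi>..1}"
    note Y = ycap[OF e(1), where c=c and m=m]
    have Fge: "\<And>x. x \<in> {0<..<1} \<Longrightarrow> Fe c \<epsilon> x (ycap c \<epsilon> m x) \<ge> -C"
      using Fe_ge e unfolding C_def by auto
    show "ycap c \<epsilon> m t < -\<epsilon>"
    proof (cases "t \<ge> 1 - 2 * \<delta>")
      case True
      have "ycap c \<epsilon> m 1 \<ge> ycap c \<epsilon> m t - C * (1 - t)"
        by (rule lower_by_deriv[where y'="\<lambda>x. Fe c \<epsilon> x (ycap c \<epsilon> m x)"])
          (use t phi Y Fge in \<open>auto intro: continuous_on_subset\<close>)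
      then have "ycap c \<epsilon> m t \<le> -m + C * (1 - t)" using Y(3) by simp
      also have "C * (1 - t) \<le> C * (2 * \<delta>)" using True C by (intro mult_left_mono) auto
      also have "C * (2 * \<delta>) \<le> m / 2" using d1 C by (simp add: field_simps)
      finally show ?thesis using e m by simp
    next
      case False
      have el1: "\<epsilon> \<le> 1" using e e1 by auto
      have t0: "0 \<le> t" using t phi by auto
      have td: "t + \<delta> \<le> 1" using False dl by auto
      have big: "(q0 / C) * ln (1 + C * \<delta> / \<epsilon>) > 1 + C * \<delta> + C" using e1(3) e by auto
      have yc: "continuous_on {t..1} (ycap c \<epsilon> m)" using t phi by (intro continuous_on_subset[OF Y(1)]) auto
      have yd: "\<And>s. s \<in> {t<..<1} \<Longrightarrow> (ycap c \<epsilon> m has_real_derivative Fe c \<epsilon> s (ycap c \<epsilon> m s)) (at s)"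
        using Y(2) t phi by auto
      have yb1: "\<And>s. s \<in> {t<..<1} \<Longrightarrow> Fe c \<epsilon> s (ycap c \<epsilon> m s) \<ge> -C" using Fge t phi by auto
      have y1: "ycap c \<epsilon> m 1 \<le> 0" using Y(3) m by simp
      have yb2: "Fe c \<epsilon> s (ycap c \<epsilon> m s) \<ge> -C + q s / max (- ycap c \<epsilon> m s) \<epsilon>" if s': "s \<in> {t<..<t+\<delta>}" for s
      proof -
        have s01: "s \<in> {0..1}" using s' t phi False dl by auto
        show ?thesis unfolding Fe_alt using Hm[OF s01] unfolding C_def by (auto simp: abs_le_iff)
      qed
      have qb: "q s \<ge> q0" if s': "s \<in> {t..t+\<delta>}" for s
      proof -
        have "s \<in> {\<phi>..1-\<delta>}" using s' t False by auto
        then show ?thesis using s unfolding q0_def by auto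
      qed
      show ?thesis
        by (rule neg_lemma[OF C e(1) el1 dl t0 td q0 big yc yd yb1 yb2 qb y1])
    qed
  qed
qed

end


context prob
begin

lemma ycap_const:
  assumes phi: "\<phi> \<in> {0<..<1}" and e1: "0 < \<epsilon>1" and e2: "0 < \<epsilon>2"
    and n1: "\<forall>t\<in>{\<phi>..1}. ycap c \<epsilon>1 m t < -\<epsilon>1" and n2: "\<forall>t\<in>{\<phi>..1}. ycap c \<epsilon>2 m t < -\<epsilon>2"
    and t: "t \<in> {\<phi>..1}"
  shows "ycap c \<epsilon>1 m t = ycap c \<epsilon>2 m t"
proof -
  define e where "e = min \<epsilon>1 \<epsilon>2"
  have e: "e > 0" using e1 e2 by (simp add: e_def)
  note Y1 = ycap[OF e1, where c=c and m=m] and Y2 = ycap[OF e2, where c=c and m=m]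
  have "(\<lambda>x. ycap c \<epsilon>1 m x - ycap c \<epsilon>2 m x) t = 0"
  proof (rule gronwall_zero[where a=\<phi> and b=1 and p=1 and L="Qm / e\<^sup>2" and w="\<lambda>x. ycap c \<epsilon>1 m x - ycap c \<epsilon>2 m x"
        and w'="\<lambda>x. Fe c \<epsilon>1 x (ycap c \<epsilon>1 m x) - Fe c \<epsilon>2 x (ycap c \<epsilon>2 m x)"])
    show "0 \<le> Qm / e\<^sup>2" using Qm_pos by simp
    show "continuous_on {\<phi>..1} (\<lambda>x. ycap c \<epsilon>1 m x - ycap c \<epsilon>2 m x)"
      using phi by (intro continuous_intros continuous_on_subset[OF Y1(1)] continuous_on_subset[OF Y2(1)]) auto
  next
    fix x assume x: "x \<in> {\<phi><..<1}"
    then have x01: "x \<in> {0<..<1}" using phi by auto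
    show "((\<lambda>x. ycap c \<epsilon>1 m x - ycap c \<epsilon>2 m x) has_real_derivative
        Fe c \<epsilon>1 x (ycap c \<epsilon>1 m x) - Fe c \<epsilon>2 x (ycap c \<epsilon>2 m x)) (at x)"
      using Y1(2)[OF x01] Y2(2)[OF x01] by (rule DERIV_diff)
    have "ycap c \<epsilon>1 m x < -\<epsilon>1" "ycap c \<epsilon>2 m x < -\<epsilon>2" using n1 n2 x by auto
    moreover have "e \<le> \<epsilon>1" "e \<le> \<epsilon>2" unfolding e_def by auto
    ultimately have a1: "ycap c \<epsilon>1 m x \<le> -e" and a2: "ycap c \<epsilon>2 m x \<le> -e" by linarith+
    have "Fe c \<epsilon>1 x (ycap c \<epsilon>1 m x) - Fe c \<epsilon>2 x (ycap c \<epsilon>2 m x)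
        = q x / ycap c \<epsilon>2 m x - q x / ycap c \<epsilon>1 m x"
      using n1 n2 x by (simp add: Fe_true less_imp_le)
    also have "\<bar>\<dots>\<bar> \<le> q x / e\<^sup>2 * \<bar>ycap c \<epsilon>2 m x - ycap c \<epsilon>1 m x\<bar>"
      by (rule inv_lip[OF a2 a1 e qnn]) (use x01 in auto)
    also have "\<dots> \<le> Qm / e\<^sup>2 * \<bar>ycap c \<epsilon>1 m x - ycap c \<epsilon>2 m x\<bar>"
      using Qm[of x] x01 by (auto intro!: mult_right_mono divide_right_mono simp: abs_minus_commute)
    finally show "\<bar>Fe c \<epsilon>1 x (ycap c \<epsilon>1 m x) - Fe c \<epsilon>2 x (ycap c \<epsilon>2 m x)\<bar>
        \<le> Qm / e\<^sup>2 * \<bar>ycap c \<epsilon>1 m x - ycap c \<epsilon>2 m x\<bar>" .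
  next
    show "1 \<in> {\<phi>..1}" using phi by auto
    show "ycap c \<epsilon>1 m 1 - ycap c \<epsilon>2 m 1 = 0" using Y1(3) Y2(3) by simp
  qed (use t in auto)
  then show ?thesis by simp
qed

definition EpsC :: "real \<Rightarrow> real \<Rightarrow> real \<Rightarrow> real" where
  "EpsC c m \<phi> = (SOME \<epsilon>0. \<epsilon>0 > 0 \<and> (\<forall>\<epsilon>. 0 < \<epsilon> \<longrightarrow> \<epsilon> \<le> \<epsilon>0 \<longrightarrow> (\<forall>t\<in>{\<phi>..1}. ycap c \<epsilon> m t < -\<epsilon>)))"

lemma EpsC:
  assumes "\<phi> \<in> {0<..<1}" "m > 0"
  shows "EpsC c m \<phi> > 0" "\<And>\<epsilon>. 0 < \<epsilon> \<Longrightarrow> \<epsilon> \<le> EpsC c m \<phi> \<Longrightarrow> \<forall>t\<in>{\<phi>..1}. ycap c \<epsilon> m t < -\<epsilon>"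
  using someI_ex[OF ycap_neg[OF assms, of c]] unfolding EpsC_def[symmetric] by auto

definition Ym :: "real \<Rightarrow> real \<Rightarrow> real \<Rightarrow> real" where
  "Ym c m x = (if x \<le> 0 then 0 else if 1 \<le> x then -m else ycap c (EpsC c m x) m x)"

lemma Ym_eq:
  assumes phi: "\<phi> \<in> {0<..<1}" and m: "m > 0" and t: "t \<in> {\<phi>..1}"
  shows "Ym c m t = ycap c (EpsC c m \<phi>) m t"
proof (cases "t = 1")
  case True
  then show ?thesis using ycap(3)[OF EpsC(1)[OF phi m]] by (simp add: Ym_def)
next
  case False
  then have t01: "t \<in> {0<..<1}" using t phi by auto
  define e' where "e' = min (EpsC c m t) (EpsC c m \<phi>)"
  have e': "e' > 0" using EpsC(1)[OF t01 m] EpsC(1)[OF phi m] by (simp add: e'_def)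
  have "ycap c (EpsC c m t) m t = ycap c e' m t"
    by (rule ycap_const[OF t01 EpsC(1)[OF t01 m] e' EpsC(2)[OF t01 m _ order_refl] EpsC(2)[OF t01 m e']])
      (use t01 EpsC(1)[OF t01 m] in \<open>auto simp: e'_def\<close>)
  also have "\<dots> = ycap c (EpsC c m \<phi>) m t"
    by (rule ycap_const[OF phi e' EpsC(1)[OF phi m] EpsC(2)[OF phi m e'] EpsC(2)[OF phi m _ order_refl]])
      (use t EpsC(1)[OF phi m] in \<open>auto simp: e'_def\<close>)
  finally show ?thesis using t01 by (simp add: Ym_def)
qed

lemma Ym_neg:
  assumes phi: "\<phi> \<in> {0<..<1}" and m: "m > 0" and t: "t \<in> {\<phi>..1}"
  shows "Ym c m t < - EpsC c m \<phi>"
  using Ym_eq[OF assms] EpsC(2)[OF phi m EpsC(1)[OF phi m] order_refl] t by auto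

lemma Ym_deriv:
  assumes x: "x \<in> {0<..<1}" and m: "m > 0"
  shows "(Ym c m has_real_derivative h x - c - q x / Ym c m x) (at x)"
proof -
  define \<phi> where "\<phi> = x / 2"
  have phi: "\<phi> \<in> {0<..<1}" using x by (auto simp: \<phi>_def)
  have e: "EpsC c m \<phi> > 0" using EpsC(1)[OF phi m] .
  have xin: "x \<in> {\<phi>..1}" using x by (auto simp: \<phi>_def)
  have neg: "ycap c (EpsC c m \<phi>) m x < - EpsC c m \<phi>" using EpsC(2)[OF phi m e order_refl] xin by auto
  have "(ycap c (EpsC c m \<phi>) m has_real_derivative Fe c (EpsC c m \<phi>) x (ycap c (EpsC c m \<phi>) m x)) (at x)"
    using ycap(2)[OF e x] .
  also have "Fe c (EpsC c m \<phi>) x (ycap c (EpsC c m \<phi>) m x) = h x - c - q x / Ym c m x"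
    using neg Ym_eq[OF phi m xin] by (simp add: Fe_true)
  finally have d: "(ycap c (EpsC c m \<phi>) m has_real_derivative h x - c - q x / Ym c m x) (at x)" .
  show ?thesis
    by (rule has_field_derivative_transform_within_open[OF d, where S="{\<phi><..<1}"])
      (use x Ym_eq[OF phi m] in \<open>auto simp: \<phi>_def\<close>)
qed

definition barrier :: "real \<Rightarrow> (real \<Rightarrow> real) \<Rightarrow> bool" where
  "barrier c \<beta> \<longleftrightarrow> continuous_on {0..1} \<beta> \<and> \<beta> 0 = 0 \<and> (\<forall>x\<in>{0<..1}. \<beta> x < 0) \<and>
     (\<forall>x\<in>{0<..<1}. \<exists>d. (\<beta> has_real_derivative d) (at x) \<and> d \<ge> h x - c - q x / \<beta> x)"

lemma ycap_above:
  assumes b: "barrier c \<beta>" and e: "\<epsilon> > 0" and m: "\<beta> 1 < -m" and x: "x \<in> {0<..1}"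
  shows "ycap c \<epsilon> m x > \<beta> x"
proof (cases "x = 1")
  case True then show ?thesis using ycap(3)[OF e] m by simp
next
  case False
  note Y = ycap[OF e, where c=c and m=m]
  define d where "d t = (SOME d. (\<beta> has_real_derivative d) (at t) \<and> d \<ge> h t - c - q t / \<beta> t)" for t
  have dP: "(\<beta> has_real_derivative d t) (at t) \<and> d t \<ge> h t - c - q t / \<beta> t" if "t \<in> {0<..<1}" for t
  proof -
    have "\<exists>d. (\<beta> has_real_derivative d) (at t) \<and> d \<ge> h t - c - q t / \<beta> t"
      using b that unfolding barrier_def by blast
    then show ?thesis unfolding d_def by (rule someI_ex)
  qed
  have bc: "continuous_on {0..1} \<beta>" and bn: "\<forall>x\<in>{0<..1}. \<beta> x < 0" using b unfolding barrier_def by auto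
  have "(\<lambda>t. ycap c \<epsilon> m t - \<beta> t) x > 0"
  proof (rule barrier_lemma[where b=1 and w="\<lambda>t. ycap c \<epsilon> m t - \<beta> t" and L="Qm / \<epsilon>\<^sup>2" and w'="\<lambda>t. Fe c \<epsilon> t (ycap c \<epsilon> m t) - d t"])
    show "x \<le> 1" using x by auto
    show "continuous_on {x..1} (\<lambda>t. ycap c \<epsilon> m t - \<beta> t)" using x
      by (intro continuous_intros continuous_on_subset[OF Y(1)] continuous_on_subset[OF bc]) auto
  next
    fix t assume t: "t \<in> {x<..<1}"
    then have t01: "t \<in> {0<..<1}" using x by auto
    show "((\<lambda>t. ycap c \<epsilon> m t - \<beta> t) has_real_derivative Fe c \<epsilon> t (ycap c \<epsilon> m t) - d t) (at t)"
      using Y(2)[OF t01] dP[OF t01] by (intro DERIV_diff) auto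
    assume pos: "ycap c \<epsilon> m t - \<beta> t > 0"
    have "d t \<ge> Fe c \<epsilon> t (\<beta> t)" using dP[OF t01] Fe_le_true[of "\<beta> t" t c \<epsilon>] bn t01 by force
    moreover have "Fe c \<epsilon> t (ycap c \<epsilon> m t) - Fe c \<epsilon> t (\<beta> t) \<le> Qm / \<epsilon>\<^sup>2 * \<bar>ycap c \<epsilon> m t - \<beta> t\<bar>"
      using capF.FL[OF capF_inst[OF e], of t c "ycap c \<epsilon> m t" "\<beta> t"] t01 by auto
    ultimately show "Fe c \<epsilon> t (ycap c \<epsilon> m t) - d t \<le> Qm / \<epsilon>\<^sup>2 * (ycap c \<epsilon> m t - \<beta> t)"
      using pos by auto
  next
    show "ycap c \<epsilon> m 1 - \<beta> 1 > 0" using Y(3) m by simp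
  qed
  then show ?thesis by simp
qed

lemma Ym_sol:
  assumes b: "barrier c \<beta>" and m: "m > 0" and bm: "\<beta> 1 < -m"
  shows "solP h q c (Ym c m)" "Ym c m 1 = -m" "\<And>x. x \<in> {0..1} \<Longrightarrow> \<beta> x \<le> Ym c m x"
proof -
  have bc: "continuous_on {0..1} \<beta>" and b0: "\<beta> 0 = 0" and bn: "\<forall>x\<in>{0<..1}. \<beta> x < 0"
    using b unfolding barrier_def by auto
  show Y1: "Ym c m 1 = -m" by (simp add: Ym_def)
  have above: "\<beta> x \<le> Ym c m x" if x: "x \<in> {0<..1}" for x
  proof (cases "x = 1")
    case True then show ?thesis using bm Y1 by simp
  next
    case False
    then have x01: "x \<in> {0<..<1}" using x by auto
    have "Ym c m x = ycap c (EpsC c m x) m x" using Ym_eq[OF x01 m, where t=x and c=c] x01 by auto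
    then show ?thesis using ycap_above[OF b EpsC(1)[OF x01 m, where c=c] bm x] by simp
  qed
  show "\<And>x. x \<in> {0..1} \<Longrightarrow> \<beta> x \<le> Ym c m x"
  proof -
    fix x :: real assume x: "x \<in> {0..1}"
    show "\<beta> x \<le> Ym c m x" using above[of x] x b0 by (cases "x = 0") (auto simp: Ym_def)
  qed
  have neg: "Ym c m x < 0" if "x \<in> {0<..<1}" for x
    using Ym_neg[OF that m, where t=x and c=c] EpsC(1)[OF that m, where c=c] that by auto
  show "solP h q c (Ym c m)"
  proof (rule solP_intro)
    show "Ym c m 0 = 0" by (simp add: Ym_def)
    show "\<And>x. x \<in> {0<..<1} \<Longrightarrow> Ym c m x < 0" by (rule neg)
    show "\<And>x. x \<in> {0<..<1} \<Longrightarrow> (Ym c m has_real_derivative h x - c - q x / Ym c m x) (at x)"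
      using Ym_deriv m by auto
    show "continuous_on {0..1} (Ym c m)"
      unfolding continuous_on_eq_continuous_within
    proof
      fix x :: real assume x: "x \<in> {0..1}"
      consider "x = 0" | "x \<in> {0<..<1}" | "x = 1" using x by fastforce
      then show "continuous (at x within {0..1}) (Ym c m)"
      proof cases
        case 1
        show ?thesis unfolding 1
        proof (rule squeeze0[OF bc b0])
          show "Ym c m 0 = 0" by (simp add: Ym_def)
          fix y :: real assume y: "y \<in> {0<..1}"
          show "\<beta> y \<le> Ym c m y \<and> Ym c m y \<le> 0" using above[OF y] neg[of y] Y1 m y
            by (cases "y = 1") auto
        qed
      next
        case 2
        have "isCont (Ym c m) x" using Ym_deriv[OF 2 m] by (rule DERIV_isCont)
        then show ?thesis by (rule continuous_at_imp_continuous_within)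
      next
        case 3
        have half: "1/2 \<in> {0<..<(1::real)}" by auto
        have "continuous (at 1 within {0..1}) (ycap c (EpsC c m (1/2)) m)"
          using ycap(1)[OF EpsC(1)[OF half m]] unfolding continuous_on_eq_continuous_within by auto
        then show ?thesis unfolding 3
        proof (rule continuous_transform_within[where \<delta>="1/2"])
          fix x' :: real assume "x' \<in> {0..1}" "dist x' 1 < 1/2"
          then have "x' \<in> {1/2..1}" by (auto simp: dist_real_def)
          then show "ycap c (EpsC c m (1/2)) m x' = Ym c m x'" using Ym_eq[OF half m] by auto
        qed auto
      qed
    qed
  qed
qed

end


lemma ftc_at:
  fixes f f' :: "real \<Rightarrow> real"
  assumes "a \<le> x" "\<And>t. t \<in> {a..x} \<Longrightarrow> (f has_real_derivative f' t) (at t)"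
  shows "integral {a..x} f' = f x - f a"
proof -
  have "(f' has_integral (f x - f a)) {a..x}"
  proof (rule fundamental_theorem_of_calculus[OF assms(1)])
    fix t assume "t \<in> {a..x}"
    then show "(f has_vector_derivative f' t) (at t within {a..x})"
      using assms(2) by (auto simp: has_real_derivative_iff_has_vector_derivative intro: has_vector_derivative_at_within)
  qed
  then show ?thesis by (rule integral_unique)
qed

context prob
begin

lemma limit_sol:
  fixes Y :: "nat \<Rightarrow> real \<Rightarrow> real" and cs :: "nat \<Rightarrow> real"
  assumes ab: "0 < a" "a \<le> b" "b < 1" and eta: "\<eta> > 0"
    and Yc: "\<And>n. continuous_on {0..1} (Y n)"
    and Yd: "\<And>n x. x \<in> {0<..<1} \<Longrightarrow> (Y n has_real_derivative h x - cs n - q x / Y n x) (at x)"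
    and Yn: "\<And>n t. t \<in> {a..b} \<Longrightarrow> Y n t \<le> -\<eta>"
    and YZ: "\<And>x. x \<in> {a..b} \<Longrightarrow> (\<lambda>n. Y n x) \<longlonglongrightarrow> Z x"
    and cc: "cs \<longlonglongrightarrow> c" and cb: "\<And>n. \<bar>cs n\<bar> \<le> Cc"
  shows "\<And>x. x \<in> {a..b} \<Longrightarrow> Z x \<le> -\<eta>"
    and "\<And>x. x \<in> {a<..<b} \<Longrightarrow> (Z has_real_derivative h x - c - q x / Z x) (at x)"
proof -
  show Zn: "\<And>x. x \<in> {a..b} \<Longrightarrow> Z x \<le> -\<eta>"
  proof -
    fix x assume x: "x \<in> {a..b}"
    show "Z x \<le> -\<eta>" by (rule LIMSEQ_le_const2[OF YZ[OF x]]) (use Yn x in auto)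
  qed
  define k where "k n s = h s - cs n - q s / Y n s" for n s
  define K where "K s = h s - c - q s / Z s" for s
  have sub: "{a..b} \<subseteq> {0..1}" using ab by auto
  have kc: "continuous_on {a..b} (k n)" for n
    unfolding k_def using Yn[of _ n] eta
    by (intro continuous_intros continuous_on_subset[OF hc sub] continuous_on_subset[OF qc sub]
        continuous_on_subset[OF Yc sub]) fastforce
  have kB: "\<bar>k n x\<bar> \<le> Hm + Cc + Qm / \<eta>" if x: "x \<in> {a..b}" for n x
  proof -
    have x01: "x \<in> {0..1}" using x sub by auto
    have "\<bar>q x / Y n x\<bar> = q x / \<bar>Y n x\<bar>" using qnn[OF x01] by (simp add: abs_div_pos)
    also have "\<dots> \<le> Qm / \<eta>" using qnn[OF x01] Qm[OF x01] Yn[OF x, of n] eta by (intro frac_le) auto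
    finally have t: "\<bar>q x / Y n x\<bar> \<le> Qm / \<eta>" .
    have "\<bar>k n x\<bar> \<le> \<bar>h x\<bar> + \<bar>cs n\<bar> + \<bar>q x / Y n x\<bar>" unfolding k_def by linarith
    then show ?thesis using Hm[OF x01] cb[of n] t by linarith
  qed
  have u: "Y n x = Y n a + integral {a..x} (k n)" if x: "x \<in> {a..b}" for n x
  proof -
    have "integral {a..x} (k n) = Y n x - Y n a"
      by (rule ftc_at) (use x ab Yd[of _ n] in \<open>auto simp: k_def\<close>)
    then show ?thesis by simp
  qed
  have kK: "(\<lambda>n. k n x) \<longlonglongrightarrow> K x" if x: "x \<in> {a..b}" for x
    unfolding k_def K_def using YZ[OF x] cc Zn[OF x] eta by (intro tendsto_intros) auto
  note G = genlim[where a=a and b=b and u=Y and k=k and U=Z and K=K, OF ab(2) u kc kB YZ kK]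
  have Zc: "continuous_on {a..b} Z"
    by (rule lip_cont[where B="Hm + Cc + Qm / \<eta>"]) (use G(2) Hm_nn cb[of 0] Qm_pos eta in \<open>auto intro!: add_nonneg_nonneg\<close>)
  have Kc: "continuous_on {a..b} K"
    unfolding K_def using Zn eta
    by (intro continuous_intros continuous_on_subset[OF hc sub] continuous_on_subset[OF qc sub] Zc) fastforce
  show "\<And>x. x \<in> {a<..<b} \<Longrightarrow> (Z has_real_derivative h x - c - q x / Z x) (at x)"
    using deriv_from_integral[OF Kc G(1)] unfolding K_def by auto
qed

lemma unif_neg:
  assumes ab: "0 < a" "a \<le> b" "b < 1"
  shows "\<exists>\<eta>>0. \<forall>y. solP h q c y \<longrightarrow> y 1 \<le> 0 \<longrightarrow> (\<forall>t\<in>{a..b}. y t < -\<eta>)"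
proof -
  define C where "C = Hm + \<bar>c\<bar> + 1"
  have C: "C > 0" using Hm_nn by (simp add: C_def add_nonneg_pos)
  define \<delta> where "\<delta> = (1 - b) / 2"
  have dl: "\<delta> > 0" using ab by (simp add: \<delta>_def)
  have ne: "{a..b+\<delta>} \<noteq> {}" using ab dl by auto
  have "b + \<delta> \<le> 1" using ab by (simp add: \<delta>_def field_simps)
  then have sb: "{a..b+\<delta>} \<subseteq> {0..1}" using ab by auto
  obtain s where s: "s \<in> {a..b+\<delta>}" "\<forall>t\<in>{a..b+\<delta>}. q s \<le> q t"
    using continuous_attains_inf[OF compact_Icc ne continuous_on_subset[OF qc sb]] by blast
  define q0 where "q0 = q s"
  have "b + \<delta> < 1" using ab by (simp add: \<delta>_def field_simps)
  then have q0: "q0 > 0" unfolding q0_def using s ab dl by (intro qpos) auto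
  obtain \<epsilon>1 where e1: "\<epsilon>1 > 0" "\<epsilon>1 \<le> 1"
    "\<forall>\<epsilon>. 0 < \<epsilon> \<longrightarrow> \<epsilon> \<le> \<epsilon>1 \<longrightarrow> (q0 / C) * ln (1 + C * \<delta> / \<epsilon>) > 1 + C * \<delta> + C"
    using ln_large[OF q0 C dl, of "1 + C * \<delta> + C"] by auto
  show ?thesis
  proof (intro exI[of _ \<epsilon>1] conjI allI impI ballI)
    show "\<epsilon>1 > 0" by fact
    fix y t assume sol: "solP h q c y" and y1: "y 1 \<le> 0" and t: "t \<in> {a..b}"
    have yc0: "continuous_on {0..1} y" and yd0: "\<And>x. x \<in> {0<..<1} \<Longrightarrow> (y has_real_derivative h x - c - q x / y x) (at x)"
      and yn0: "\<And>x. x \<in> {0<..<1} \<Longrightarrow> y x < 0"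
      using sol unfolding solP_def by auto
    have t0: "0 \<le> t" using t ab by auto
    have td: "t + \<delta> \<le> 1" using t \<open>b + \<delta> < 1\<close> by auto
    have big: "(q0 / C) * ln (1 + C * \<delta> / \<epsilon>1) > 1 + C * \<delta> + C" using e1 by auto
    have yc: "continuous_on {t..1} y" using t0 by (intro continuous_on_subset[OF yc0]) auto
    have yd: "\<And>s. s \<in> {t<..<1} \<Longrightarrow> (y has_real_derivative h s - c - q s / y s) (at s)"
      using yd0 t0 by auto
    have yb1: "h s - c - q s / y s \<ge> -C" if s': "s \<in> {t<..<1}" for s
    proof -
      have s01: "s \<in> {0<..<1}" using s' t0 by auto
      have "q s / y s \<le> 0" using qnn[of s] yn0[OF s01] s01 by (intro divide_nonneg_neg) auto
      then show ?thesis using Hm[of s] s01 unfolding C_def by (auto simp: abs_le_iff)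
    qed
    have yb2: "h s - c - q s / y s \<ge> -C + q s / max (- y s) \<epsilon>1" if s': "s \<in> {t<..<t+\<delta>}" for s
    proof -
      have s01: "s \<in> {0<..<1}" using s' t0 td by auto
      have "q s / max (- y s) \<epsilon>1 \<le> q s / (- y s)"
        using qnn[of s] yn0[OF s01] s01 e1(1) by (intro divide_left_mono) (auto intro!: mult_pos_neg)
      then have "q s / max (- y s) \<epsilon>1 \<le> - (q s / y s)" by simp
      then show ?thesis using Hm[of s] s01 unfolding C_def by (auto simp: abs_le_iff)
    qed
    have qb: "q s' \<ge> q0" if s': "s' \<in> {t..t+\<delta>}" for s'
    proof -
      have "s' \<in> {a..b+\<delta>}" using s' t by auto
      then show ?thesis using s unfolding q0_def by auto
    qed
    show "y t < -\<epsilon>1"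
      by (rule neg_lemma[OF C e1(1) e1(2) dl t0 td q0 big yc yd yb1 yb2 qb y1])
  qed
qed

end


context prob
begin

lemma sol_le_0:
  assumes "solP h q c z" "z 1 \<le> 0" "x \<in> {0..1}"
  shows "z x \<le> 0"
  using assms unfolding solP_def by (cases "x = 0 \<or> x = 1") (auto simp: less_imp_le)

lemma sol_limit_deriv:
  fixes Y :: "nat \<Rightarrow> real \<Rightarrow> real"
  assumes sol: "\<And>n. solP h q c (Y n)" and Y1: "\<And>n. Y n 1 \<le> 0"
    and YZ: "\<And>x. x \<in> {0..1} \<Longrightarrow> (\<lambda>n. Y n x) \<longlonglongrightarrow> Z x"
    and x: "x \<in> {0<..<1}"
  shows "Z x < 0" "(Z has_real_derivative h x - c - q x / Z x) (at x)"
proof -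
  define a where "a = x / 2"
  define b where "b = (1 + x) / 2"
  have ab: "0 < a" "a \<le> b" "b < 1" "x \<in> {a<..<b}" using x by (auto simp: a_def b_def)
  obtain \<eta> where eta: "\<eta> > 0" "\<forall>y. solP h q c y \<longrightarrow> y 1 \<le> 0 \<longrightarrow> (\<forall>t\<in>{a..b}. y t < -\<eta>)"
    using unif_neg[OF ab(1-3), of c] by blast
  have Yc: "\<And>n. continuous_on {0..1} (Y n)" and
    Yd: "\<And>n x. x \<in> {0<..<1} \<Longrightarrow> (Y n has_real_derivative h x - c - q x / Y n x) (at x)"
    using sol unfolding solP_def by auto
  have Yn: "\<And>n t. t \<in> {a..b} \<Longrightarrow> Y n t \<le> -\<eta>" using eta sol Y1 by (meson less_imp_le)
  have YZ': "\<And>x. x \<in> {a..b} \<Longrightarrow> (\<lambda>n. Y n x) \<longlonglongrightarrow> Z x" using YZ ab by auto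
  note L = limit_sol[OF ab(1-3) eta(1) Yc _ Yn YZ', where cs="\<lambda>_. c" and c=c and Cc="\<bar>c\<bar>"]
  have "Z x \<le> -\<eta>" using L(1)[of x] Yd ab by auto
  then show "Z x < 0" using eta by simp
  show "(Z has_real_derivative h x - c - q x / Z x) (at x)" using L(2)[of x] Yd ab by auto
qed

lemma P00_from_barrier:
  assumes b: "barrier c \<beta>"
  shows "\<exists>z. solP00 h q c z"
proof -
  have bc: "continuous_on {0..1} \<beta>" and b0: "\<beta> 0 = 0" and bn: "\<forall>x\<in>{0<..1}. \<beta> x < 0"
    using b unfolding barrier_def by auto
  define m0 where "m0 = - \<beta> 1"
  have m0: "m0 > 0" using bn by (auto simp: m0_def)
  define ms where "ms n = m0 * inverse (real (Suc (Suc n)))" for n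
  have ms_pos: "ms n > 0" for n using m0 by (simp add: ms_def)
  have ms_lt: "ms n < m0" for n using m0 by (simp add: ms_def field_simps) (auto intro!: add_pos_nonneg)
  have ms_dec: "ms (Suc n) < ms n" for n unfolding ms_def using m0 by (intro mult_strict_left_mono) auto
  have ms_lim: "ms \<longlonglongrightarrow> 0"
  proof -
    have "(\<lambda>n. inverse (real (Suc (Suc n)))) \<longlonglongrightarrow> 0"
      using LIMSEQ_Suc[OF LIMSEQ_inverse_real_of_nat] by simp
    then show ?thesis unfolding ms_def by (rule tendsto_mult_right_zero)
  qed
  define Y where "Y n = Ym c (ms n)" for n
  have bm: "\<beta> 1 < - ms n" for n using ms_lt[of n] by (simp add: m0_def)
  have sol: "solP h q c (Y n)" and Y1: "Y n 1 = - ms n" and Yb: "\<And>x. x \<in> {0..1} \<Longrightarrow> \<beta> x \<le> Y n x" for n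
    using Ym_sol[OF b ms_pos bm] unfolding Y_def by auto
  have Y1': "Y n 1 \<le> 0" for n using Y1[of n] ms_pos[of n] by simp
  have Yle0: "Y n x \<le> 0" if "x \<in> {0..1}" for n x using sol_le_0[OF sol Y1' that] .
  have Yinc: "Y n x \<le> Y (Suc n) x" if x: "x \<in> {0..1}" for n x
  proof (rule ccontr)
    assume gt: "\<not> Y n x \<le> Y (Suc n) x"
    have x01: "x \<in> {0<..<1}"
    proof -
      have "x \<noteq> 0" using gt sol[of n] sol[of "Suc n"] unfolding solP_def by auto
      moreover have "x \<noteq> 1" using gt Y1[of n] Y1[of "Suc n"] ms_dec[of n] by auto
      ultimately show ?thesis using x by auto
    qed
    have "Y n 1 - Y (Suc n) 1 \<ge> Y n x - Y (Suc n) x"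
      by (rule compare[OF order_refl _ _ _ _ _ _ x01]) (use sol[of n] sol[of "Suc n"] gt in \<open>auto simp: solP_def\<close>)
    then show False using gt Y1[of n] Y1[of "Suc n"] ms_dec[of n] by auto
  qed
  define Z where "Z x = (SUP n. Y n x)" for x
  have YZ: "(\<lambda>n. Y n x) \<longlonglongrightarrow> Z x" if x: "x \<in> {0..1}" for x
    unfolding Z_def
  proof (rule LIMSEQ_incseq_SUP)
    show "bdd_above (range (\<lambda>n. Y n x))" using Yle0[OF x] by (intro bdd_aboveI[of _ 0]) auto
    show "incseq (\<lambda>n. Y n x)" using Yinc[OF x] by (intro incseq_SucI) auto
  qed
  have Yinc': "incseq (\<lambda>n. Y n x)" if x: "x \<in> {0..1}" for x using Yinc[OF x] by (intro incseq_SucI) auto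
  have YleZ: "Y n x \<le> Z x" if x: "x \<in> {0..1}" for n x by (rule incseq_le[OF Yinc'[OF x] YZ[OF x]])
  have Zle0: "Z x \<le> 0" if x: "x \<in> {0..1}" for x by (rule LIMSEQ_le_const2[OF YZ[OF x]]) (use Yle0 x in auto)
  have Z0: "Z 0 = 0"
  proof -
    have "Y n 0 = 0" for n using sol[of n] unfolding solP_def by auto
    then show ?thesis using YZ[of 0] by (simp add: LIMSEQ_const_iff)
  qed
  have Z1: "Z 1 = 0"
  proof -
    have "(\<lambda>n. Y n 1) \<longlonglongrightarrow> 0" using ms_lim Y1 tendsto_minus[OF ms_lim] by simp
    then show ?thesis using YZ[of 1] LIMSEQ_unique by auto
  qed
  have Zd: "Z x < 0 \<and> (Z has_real_derivative h x - c - q x / Z x) (at x)" if x: "x \<in> {0<..<1}" for x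
    using sol_limit_deriv[OF sol Y1' YZ x] by auto
  have Zc: "continuous_on {0..1} Z"
    unfolding continuous_on_eq_continuous_within
  proof
    fix x :: real assume x: "x \<in> {0..1}"
    consider "x = 0" | "x \<in> {0<..<1}" | "x = 1" using x by fastforce
    then show "continuous (at x within {0..1}) Z"
    proof cases
      case 1
      show ?thesis unfolding 1
      proof (rule squeeze0[where z=Z, OF bc b0 Z0])
        fix y :: real assume y: "y \<in> {0<..1}"
        show "\<beta> y \<le> Z y \<and> Z y \<le> 0" using Yb[of y 0] YleZ[of y 0] Zle0[of y] y by auto
      qed
    next
      case 2
      have "isCont Z x" using Zd[OF 2] by (meson DERIV_isCont)
      then show ?thesis by (rule continuous_at_imp_continuous_within)
    next
      case 3
      show ?thesis unfolding 3 continuous_within_eps_delta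
      proof (intro allI impI)
        fix e :: real assume e: "e > 0"
        have "eventually (\<lambda>n. ms n < e / 2) sequentially" using ms_lim e by (intro order_tendstoD(2)) auto
        then obtain n where n: "ms n < e / 2" by (meson eventually_sequentially order_refl)
        have "continuous (at 1 within {0..1}) (Y n)"
          using sol[of n] unfolding solP_def continuous_on_eq_continuous_within by auto
        then obtain d where d: "d > 0" "\<forall>x'\<in>{0..1}. dist x' 1 < d \<longrightarrow> dist (Y n x') (Y n 1) < e / 2"
          unfolding continuous_within_eps_delta using e by (meson half_gt_zero)
        show "\<exists>d>0. \<forall>x'\<in>{0..1}. dist x' 1 < d \<longrightarrow> dist (Z x') (Z 1) < e"
        proof (intro exI[of _ d] conjI ballI impI)
          show "d > 0" by fact
          fix x' :: real assume x': "x' \<in> {0..1}" "dist x' 1 < d"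
          have "dist (Y n x') (Y n 1) < e / 2" using d(2) x' by auto
          then have "\<bar>Y n x' - Y n 1\<bar> < e / 2" by (simp add: dist_real_def)
          then have "Y n x' > Y n 1 - e / 2" by linarith
          then have "Y n x' > - e" using Y1[of n] n by simp
          then show "dist (Z x') (Z 1) < e" using YleZ[OF x'(1), of n] Zle0[OF x'(1)] Z1
            by (auto simp: dist_real_def)
        qed
      qed
    qed
  qed
  have "solP h q c Z" by (rule solP_intro[OF Zc Z0]) (use Zd in auto)
  then show ?thesis using Z1 unfolding solP00_def by blast
qed

end


context prob
begin

lemma sol_1_le:
  assumes sol: "solP h q c z"
  shows "z 1 \<le> 0"
proof (rule ccontr)
  assume "\<not> z 1 \<le> 0"
  then have pos: "z 1 > 0" by simp
  have "continuous (at 1 within {0..1}) z"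
    using sol unfolding solP_def continuous_on_eq_continuous_within by auto
  then obtain d where d: "d > 0" "\<forall>x'\<in>{0..1}. dist x' 1 < d \<longrightarrow> dist (z x') (z 1) < z 1"
    unfolding continuous_within_eps_delta using pos by blast
  define x' where "x' = max (1 - d / 2) (1 / 2)"
  have x': "x' \<in> {0<..<1}" "dist x' 1 < d" using d by (auto simp: x'_def dist_real_def)
  have "z x' < 0" using sol x' unfolding solP_def by auto
  moreover have "dist (z x') (z 1) < z 1" using d x' by auto
  ultimately show False by (auto simp: dist_real_def)
qed

lemma P00_from_Pc:
  assumes sol: "solP h q c z"
  shows "\<exists>z. solP00 h q c z"
proof (cases "z 1 = 0")
  case True then show ?thesis using sol unfolding solP00_def by blast
next
  case False
  then have z1: "z 1 < 0" using sol_1_le[OF sol] by simp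
  have "barrier c z"
    unfolding barrier_def
  proof (intro conjI ballI)
    show "continuous_on {0..1} z" "z 0 = 0" using sol unfolding solP_def by auto
  next
    fix x :: real assume "x \<in> {0<..1}"
    then show "z x < 0" using sol z1 unfolding solP_def by (cases "x = 1") auto
  next
    fix x :: real assume "x \<in> {0<..<1}"
    then show "\<exists>d. (z has_real_derivative d) (at x) \<and> d \<ge> h x - c - q x / z x"
      using sol unfolding solP_def by auto
  qed
  then show ?thesis by (rule P00_from_barrier)
qed

lemma P00_up:
  assumes sol: "solP00 h q c z" and cc: "c < c'"
  shows "\<exists>z. solP00 h q c' z"
proof -
  have zs: "solP h q c z" and z1: "z 1 = 0" using sol unfolding solP00_def by auto
  have zle: "z x \<le> 0" if "x \<in> {0..1}" for x using sol_le_0[OF zs _ that] z1 by simp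
  have "barrier c' (\<lambda>x. z x - (c' - c) * x)"
    unfolding barrier_def
  proof (intro conjI ballI)
    show "continuous_on {0..1} (\<lambda>x. z x - (c' - c) * x)"
      using zs unfolding solP_def by (auto intro!: continuous_intros)
    show "z 0 - (c' - c) * 0 = 0" using zs unfolding solP_def by auto
  next
    fix x :: real assume x: "x \<in> {0<..1}"
    have "(c' - c) * x > 0" using x cc by (auto intro: mult_pos_pos)
    then show "z x - (c' - c) * x < 0" using zle[of x] x by auto
  next
    fix x :: real assume x: "x \<in> {0<..<1}"
    have zn: "z x < 0" using zs x unfolding solP_def by auto
    have bl: "z x - (c' - c) * x < z x" using x cc by (auto intro: mult_pos_pos)
    have "inverse (z x) \<le> inverse (z x - (c' - c) * x)"
      using bl zn by (intro le_imp_inverse_le_neg) auto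
    then have "q x * inverse (z x) \<le> q x * inverse (z x - (c' - c) * x)"
      using qnn[of x] x by (intro mult_left_mono) auto
    then have ineq: "h x - c - q x / z x - (c' - c) \<ge> h x - c' - q x / (z x - (c' - c) * x)"
      by (simp add: divide_inverse)
    have "((\<lambda>x. z x - (c' - c) * x) has_real_derivative (h x - c - q x / z x) - (c' - c)) (at x)"
      using zs x unfolding solP_def by (auto intro!: derivative_eq_intros)
    then show "\<exists>d. ((\<lambda>x. z x - (c' - c) * x) has_real_derivative d) (at x) \<and>
        d \<ge> h x - c' - q x / (z x - (c' - c) * x)"
      using ineq by auto
  qed
  then show ?thesis by (rule P00_from_barrier)
qed

lemma P00_order:
  assumes "c \<le> c'" "solP00 h q c z" "solP00 h q c' z'" "x \<in> {0..1}"
  shows "z x \<le> z' x"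
proof (rule ccontr)
  assume gt: "\<not> z x \<le> z' x"
  have s: "solP h q c z" "solP h q c' z'" "z 1 = 0" "z' 1 = 0" using assms unfolding solP00_def by auto
  have x01: "x \<in> {0<..<1}"
  proof -
    have "x \<noteq> 0" using gt s unfolding solP_def by auto
    moreover have "x \<noteq> 1" using gt s by auto
    ultimately show ?thesis using assms(4) by auto
  qed
  have "z 1 - z' 1 \<ge> z x - z' x"
    by (rule compare[OF assms(1) _ _ _ _ _ _ x01]) (use s gt in \<open>auto simp: solP_def\<close>)
  then show False using gt s by auto
qed

end


context prob
begin

lemma P00_closed:
  assumes up: "\<And>c. c > cst \<Longrightarrow> \<exists>z. solP00 h q c z"
  shows "\<exists>z. solP00 h q cst z"
proof -
  define cn where "cn n = cst + inverse (real (Suc n))" for n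
  have cn_gt: "cn n > cst" for n by (simp add: cn_def)
  have cn_le: "cn n \<le> cst + 1" for n
  proof -
    have "inverse (real (Suc n)) \<le> 1" by (rule inverse_le_1_iff[THEN iffD2]) auto
    then show ?thesis by (simp add: cn_def)
  qed
  have cn_dec: "cn (Suc n) \<le> cn n" for n by (simp add: cn_def)
  have cn_lim: "cn \<longlonglongrightarrow> cst"
    unfolding cn_def using tendsto_add[OF tendsto_const LIMSEQ_inverse_real_of_nat, of cst] by simp
  define C where "C = Hm + \<bar>cst\<bar> + 2"
  have C: "C > 0" using Hm_nn by (simp add: C_def add_nonneg_pos)
  have cnb: "\<bar>cn n\<bar> \<le> \<bar>cst\<bar> + 1" for n using cn_gt[of n] cn_le[of n] by auto
  define z where "z n = (SOME z. solP00 h q (cn n) z)" for n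
  have zs: "solP00 h q (cn n) (z n)" for n unfolding z_def using up[OF cn_gt] by (rule someI_ex)
  have sol: "solP h q (cn n) (z n)" and z1: "z n 1 = 0" for n using zs[of n] unfolding solP00_def by auto
  have zc: "continuous_on {0..1} (z n)" and z0: "z n 0 = 0"
    and zd: "\<And>x. x \<in> {0<..<1} \<Longrightarrow> (z n has_real_derivative h x - cn n - q x / z n x) (at x)"
    and zn: "\<And>x. x \<in> {0<..<1} \<Longrightarrow> z n x < 0" for n
    using sol[of n] unfolding solP_def by auto
  have zdec: "z (Suc n) x \<le> z n x" if "x \<in> {0..1}" for n x by (rule P00_order[OF cn_dec zs zs that])
  have zle0: "z n x \<le> z 0 x" if "x \<in> {0..1}" for n x
    by (rule P00_order[OF _ zs zs that]) (simp add: cn_def inverse_le_1_iff)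
  have z0le: "z 0 x \<le> 0" if "x \<in> {0..1}" for x using sol_le_0[OF sol _ that] z1 by simp
  have dge: "h x - cn n - q x / z n x \<ge> - C" if x: "x \<in> {0<..<1}" for n x
  proof -
    have "q x / z n x \<le> 0" using qnn[of x] zn[OF x] x by (intro divide_nonneg_neg) auto
    then show ?thesis using Hm[of x] cnb[of n] x unfolding C_def by (auto simp: abs_le_iff)
  qed
  have zlow: "z n x \<ge> - C * x" if x: "x \<in> {0..1}" for n x
  proof -
    have "z n x \<ge> z n 0 - C * (x - 0)"
      by (rule lower_by_deriv[where y'="\<lambda>t. h t - cn n - q t / z n t"])
        (use x zd dge continuous_on_subset[OF zc[of n], of "{0..x}"] in auto)
    then show ?thesis using z0 by simp
  qed
  define Z where "Z x = (INF n. z n x)" for x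
  have zZ: "(\<lambda>n. z n x) \<longlonglongrightarrow> Z x" if x: "x \<in> {0..1}" for x
    unfolding Z_def
  proof (rule LIMSEQ_decseq_INF)
    show "bdd_below (range (\<lambda>n. z n x))" using zlow[OF x] by (intro bdd_belowI[of _ "- C * x"]) auto
    show "decseq (\<lambda>n. z n x)" using zdec[OF x] by (intro decseq_SucI) auto
  qed
  have Zle: "Z x \<le> z 0 x" if x: "x \<in> {0..1}" for x
    by (rule LIMSEQ_le_const2[OF zZ[OF x]]) (use zle0 x in auto)
  have Zge: "Z x \<ge> - C * x" if x: "x \<in> {0..1}" for x
    by (rule LIMSEQ_le_const[OF zZ[OF x]]) (use zlow x in auto)
  have Z0: "Z 0 = 0" using Zle[of 0] Zge[of 0] z0[of 0] by simp
  have Zd: "Z x < 0 \<and> (Z has_real_derivative h x - cst - q x / Z x) (at x)" if x: "x \<in> {0<..<1}" for x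
  proof -
    define a where "a = x / 2"
    define b where "b = (1 + x) / 2"
    have ab: "0 < a" "a \<le> b" "b < 1" "x \<in> {a<..<b}" using x by (auto simp: a_def b_def)
    have sub: "{a..b} \<subseteq> {0..1}" using ab by auto
    obtain s where s: "s \<in> {a..b}" "\<forall>t\<in>{a..b}. z 0 t \<le> z 0 s"
      using continuous_attains_sup[OF compact_Icc _ continuous_on_subset[OF zc[of 0] sub]] ab by auto
    define \<eta> where "\<eta> = - z 0 s"
    have eta: "\<eta> > 0" unfolding \<eta>_def using zn[of s 0] s ab by auto
    have Yn: "z n t \<le> -\<eta>" if t: "t \<in> {a..b}" for n t
      using zle0[of t n] s t sub unfolding \<eta>_def by force
    note L = limit_sol[OF ab(1-3) eta zc zd Yn _ cn_lim cnb, where Z=Z]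
    have "Z x \<le> -\<eta>" using L(1)[of x] zZ ab sub by auto
    then show ?thesis using eta L(2)[of x] zZ ab sub by auto
  qed
  define W where "W x = Z x + C * x" for x
  have Wmono: "W x0 \<le> W x" if "x0 \<in> {0<..<1}" "x \<in> {0<..<1}" "x0 \<le> x" for x0 x
  proof (rule DERIV_nonneg_imp_increasing_open[of x0 x W])
    fix t assume t: "x0 < t" "t < x"
    then have t01: "t \<in> {0<..<1}" using that by auto
    have "h t - cst - q t / Z t \<ge> - (Hm + \<bar>cst\<bar>)"
    proof -
      have "q t / Z t \<le> 0" using qnn[of t] Zd[OF t01] t01 by (intro divide_nonneg_neg) auto
      then show ?thesis using Hm[of t] t01 by (auto simp: abs_le_iff)
    qed
    then have "h t - cst - q t / Z t + C \<ge> 0" unfolding C_def by linarith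
    moreover have "(W has_real_derivative (h t - cst - q t / Z t) + C * 1) (at t)"
      unfolding W_def using Zd[OF t01] by (intro DERIV_add DERIV_cmult DERIV_ident) auto
    ultimately show "\<exists>y. (W has_real_derivative y) (at t) \<and> 0 \<le> y" by auto
  next
    show "continuous_on {x0..x} W"
    proof (intro continuous_at_imp_continuous_on ballI)
      fix t assume "t \<in> {x0..x}"
      then have t01: "t \<in> {0<..<1}" using that by auto
      have "isCont Z t" using Zd[OF t01] by (meson DERIV_isCont)
      then show "isCont W t" unfolding W_def by (auto intro!: continuous_intros)
    qed
  qed (use that in auto)
  have Wb: "W x \<le> C" "W x \<ge> 0" if "x \<in> {0<..<1}" for x
  proof -
    have "C * x \<le> C" using that C by (simp add: mult_left_le)
    then show "W x \<le> C" "W x \<ge> 0" using Zle[of x] z0le[of x] Zge[of x] that unfolding W_def by auto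
  qed
  define Lm where "Lm = (SUP x\<in>{0<..<1::real}. W x)"
  have ne: "{0<..<1::real} \<noteq> {}" by (auto intro: exI[of _ "1/2"])
  have bW: "bdd_above (W ` {0<..<1})" using Wb by (intro bdd_aboveI[of _ C]) auto
  have Lm_le: "Lm \<le> C" unfolding Lm_def using Wb ne by (intro cSUP_least) auto
  have Lm_ge: "W x \<le> Lm" if "x \<in> {0<..<1}" for x unfolding Lm_def by (rule cSUP_upper[OF that bW])
  have Lm0: "Lm \<ge> 0" using Lm_ge[of "1/2"] Wb[of "1/2"] by auto
  define Zh where "Zh x = (if x = 1 then Lm - C else Z x)" for x
  have "solP h q cst Zh"
  proof (rule solP_intro)
    show "Zh 0 = 0" using Z0 by (simp add: Zh_def)
    show "\<And>x. x \<in> {0<..<1} \<Longrightarrow> Zh x < 0" using Zd by (auto simp: Zh_def)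
  next
    fix x :: real assume x: "x \<in> {0<..<1}"
    have "(Z has_real_derivative h x - cst - q x / Z x) (at x)" using Zd[OF x] by auto
    then have "(Zh has_real_derivative h x - cst - q x / Z x) (at x)"
      by (rule has_field_derivative_transform_within_open[where S="{0<..<1}"]) (use x in \<open>auto simp: Zh_def\<close>)
    moreover have "Zh x = Z x" using x by (simp add: Zh_def)
    ultimately show "(Zh has_real_derivative h x - cst - q x / Zh x) (at x)" by simp
  next
    show "continuous_on {0..1} Zh"
      unfolding continuous_on_eq_continuous_within
    proof
      fix x :: real assume x: "x \<in> {0..1}"
      consider "x = 0" | "x \<in> {0<..<1}" | "x = 1" using x by fastforce
      then show "continuous (at x within {0..1}) Zh"
      proof cases
        case 1
        show ?thesis unfolding 1
        proof (rule squeeze0[where z=Zh and \<beta>="\<lambda>x. - C * x"])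
          show "continuous_on {0..1} (\<lambda>x. - C * x)" by (intro continuous_intros)
          show "Zh 0 = 0" using Z0 by (simp add: Zh_def)
          fix y :: real assume y: "y \<in> {0<..1}"
          show "- C * y \<le> Zh y \<and> Zh y \<le> 0"
          proof (cases "y = 1")
            case True then show ?thesis using Lm0 Lm_le by (simp add: Zh_def)
          next
            case False then show ?thesis using Zge[of y] Zd[of y] y by (auto simp: Zh_def less_imp_le)
          qed
        qed auto
      next
        case 2
        have "isCont Zh x"
        proof -
          have "isCont Z x" using Zd[OF 2] by (meson DERIV_isCont)
          then show ?thesis
            by (rule continuous_transform_within[where \<delta>="min x (1 - x)" and s=UNIV, simplified])
              (use 2 in \<open>auto simp: Zh_def dist_real_def\<close>)
        qed
        then show ?thesis by (rule continuous_at_imp_continuous_within)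
      next
        case 3
        show ?thesis unfolding 3 continuous_within_eps_delta
        proof (intro allI impI)
          fix e :: real assume e: "e > 0"
          have "Lm - e / 2 < Lm" using e by simp
          then obtain x0 where x0: "x0 \<in> {0<..<1}" "Lm - e / 2 < W x0"
            unfolding Lm_def using less_cSUP_iff[OF ne bW] by blast
          define d where "d = min (1 - x0) (e / (2 * C + 1))"
          have d: "d > 0" using x0 e C by (auto simp: d_def)
          show "\<exists>d>0. \<forall>x'\<in>{0..1}. dist x' 1 < d \<longrightarrow> dist (Zh x') (Zh 1) < e"
          proof (intro exI[of _ d] conjI ballI impI)
            show "d > 0" by fact
            fix x' :: real assume x': "x' \<in> {0..1}" "dist x' 1 < d"
            show "dist (Zh x') (Zh 1) < e"
            proof (cases "x' = 1")
              case True then show ?thesis using e by simp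
            next
              case False
              have x'01: "x' \<in> {0<..<1}" "x0 \<le> x'" "1 - x' < d" using x' False x0 d
                by (auto simp: dist_real_def d_def)
              have w1: "W x' > Lm - e / 2" using Wmono[OF x0(1) x'01(1,2)] x0 by simp
              have w2: "W x' \<le> Lm" using Lm_ge[OF x'01(1)] .
              have "C * (1 - x') \<le> C * (e / (2 * C + 1))"
                using x'01 C by (intro mult_left_mono) (auto simp: d_def)
              also have "\<dots> < e / 2" using C e by (simp add: field_simps)
              finally have cb: "C * (1 - x') < e / 2" .
              have cb0: "C * (1 - x') \<ge> 0" using C x'01 by auto
              have "Zh x' - Zh 1 = (W x' - Lm) + C * (1 - x')"
                using False by (simp add: Zh_def W_def algebra_simps)
              then show ?thesis using w1 w2 cb cb0 by (auto simp: dist_real_def abs_if)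
            qed
          qed
        qed
      qed
    qed
  qed
  then show ?thesis by (rule P00_from_Pc)
qed

end


context prob
begin

lemma qx_bdd:
  assumes ls: "Limsup (at_right 0) (\<lambda>x. ereal (q x / x)) < \<infinity>"
  shows "bdd_above ((\<lambda>x. q x / x) ` {0<..1})"
proof -
  obtain K :: real where K: "Limsup (at_right 0) (\<lambda>x. ereal (q x / x)) < ereal K"
  proof (cases "Limsup (at_right 0) (\<lambda>x. ereal (q x / x))")
    case (real r) then show ?thesis using that[of "r + 1"] by auto
  next
    case PInf then show ?thesis using ls by simp
  next
    case MInf then show ?thesis using that[of 0] by simp
  qed
  have "eventually (\<lambda>x. ereal (q x / x) < ereal K) (at_right 0)" by (rule Limsup_lessD[OF K])
  then obtain b :: real where b: "b > 0" "\<And>y. y > 0 \<Longrightarrow> y < b \<Longrightarrow> q y / y < K"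
    unfolding eventually_at_right_field by auto
  show ?thesis
  proof (rule bdd_aboveI2[of _ _ "max K (Qm / b)"])
    fix x :: real assume x: "x \<in> {0<..1}"
    show "q x / x \<le> max K (Qm / b)"
    proof (cases "x < b")
      case True then show ?thesis using b(2)[of x] x by auto
    next
      case False
      have "q x / x \<le> Qm / x" using Qm[of x] x by (intro divide_right_mono) auto
      also have "\<dots> \<le> Qm / b" using False b Qm_pos by (intro divide_left_mono) auto
      finally show ?thesis by simp
    qed
  qed
qed

lemma f_bounds:
  assumes fd: "\<forall>x\<in>{0..1}. (f has_real_derivative h x) (at x within {0..1})" and f0: "f 0 = 0"
    and x: "x \<in> {0..1}"
  shows "\<bar>f x\<bar> \<le> Hm * x"
proof -
  have fc: "continuous_on {0..1} f" using fd by (intro DERIV_continuous_on) auto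
  have fat: "(f has_real_derivative h t) (at t)" if "t \<in> {0<..<1}" for t
  proof -
    have "(f has_real_derivative h t) (at t within {0..1})" using fd that by auto
    moreover have "at t within {0..1} = at t" using that by (intro at_within_interior) auto
    ultimately show ?thesis by simp
  qed
  have hge: "h t \<ge> - Hm" if "t \<in> {0..1}" for t using Hm[OF that] by (simp add: abs_le_iff)
  have "f x \<ge> f 0 - Hm * (x - 0)"
    by (rule lower_by_deriv[where y'=h]) (use x fat hge continuous_on_subset[OF fc, of "{0..x}"] in auto)
  moreover have "(\<lambda>t. - f t) x \<ge> (\<lambda>t. - f t) 0 - Hm * (x - 0)"
  proof (rule lower_by_deriv[where y'="\<lambda>t. - h t"])
    show "continuous_on {0..x} (\<lambda>t. - f t)" using x by (intro continuous_intros continuous_on_subset[OF fc]) auto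
    show "\<And>t. t \<in> {0<..<x} \<Longrightarrow> ((\<lambda>t. - f t) has_real_derivative - h t) (at t)"
      using x fat by (auto intro!: derivative_eq_intros)
    show "\<And>t. t \<in> {0<..<x} \<Longrightarrow> - h t \<ge> - Hm" using x Hm by (force simp: abs_le_iff)
  qed (use x in auto)
  ultimately show ?thesis using f0 by auto
qed

lemma upper_exists:
  assumes fd: "\<forall>x\<in>{0..1}. (f has_real_derivative h x) (at x within {0..1})" and f0: "f 0 = 0"
    and ls: "Limsup (at_right 0) (\<lambda>x. ereal (q x / x)) < \<infinity>"
  shows "\<exists>z. solP00 h q (2 * sqrt (Sup ((\<lambda>x. q x / x) ` {0<..1})) + Sup ((\<lambda>x. f x / x) ` {0<..1})) z"
proof -
  define M where "M = Sup ((\<lambda>x. q x / x) ` {0<..1})"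
  define Fs where "Fs = Sup ((\<lambda>x. f x / x) ` {0<..1})"
  have bq: "bdd_above ((\<lambda>x. q x / x) ` {0<..1})" by (rule qx_bdd[OF ls])
  have fle: "f x / x \<le> Hm" if "x \<in> {0<..1}" for x
  proof -
    have "\<bar>f x\<bar> \<le> Hm * x" using f_bounds[OF fd f0, of x] that by auto
    then have "f x \<le> Hm * x" by simp
    then show ?thesis using that by (simp add: divide_le_eq)
  qed
  have bf: "bdd_above ((\<lambda>x. f x / x) ` {0<..1})" using fle by (intro bdd_aboveI2) auto
  have qM: "q x / x \<le> M" if "x \<in> {0<..1}" for x unfolding M_def by (rule cSUP_upper[OF that bq])
  have fF: "f x \<le> Fs * x" if x: "x \<in> {0<..1}" for x
  proof -
    have "f x / x \<le> Fs" unfolding Fs_def by (rule cSUP_upper[OF x bf])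
    then show ?thesis using x by (simp add: divide_le_eq)
  qed
  have M: "M > 0"
  proof -
    have "q (1/2) / (1/2) > 0" using qpos[of "1/2"] by simp
    then show ?thesis using qM[of "1/2"] by simp
  qed
  define sM where "sM = sqrt M"
  have sM: "sM > 0" "sM * sM = M" using M by (auto simp: sM_def)
  define c where "c = 2 * sM + Fs"
  define \<beta> where "\<beta> x = f x - (Fs + sM) * x" for x
  have fc: "continuous_on {0..1} f" using fd by (intro DERIV_continuous_on) auto
  have fat: "(f has_real_derivative h t) (at t)" if "t \<in> {0<..<1}" for t
  proof -
    have "(f has_real_derivative h t) (at t within {0..1})" using fd that by auto
    moreover have "at t within {0..1} = at t" using that by (intro at_within_interior) auto
    ultimately show ?thesis by simp
  qed
  have bneg: "\<beta> x \<le> - sM * x" if "x \<in> {0<..1}" for x using fF[OF that] unfolding \<beta>_def by (simp add: algebra_simps)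
  have "barrier c \<beta>"
    unfolding barrier_def
  proof (intro conjI ballI)
    show "continuous_on {0..1} \<beta>" unfolding \<beta>_def by (intro continuous_intros fc)
    show "\<beta> 0 = 0" using f0 by (simp add: \<beta>_def)
  next
    fix x :: real assume x: "x \<in> {0<..1}"
    have "- sM * x < 0" using sM x by (simp add: mult_pos_pos)
    then show "\<beta> x < 0" using bneg[OF x] by simp
  next
    fix x :: real assume x: "x \<in> {0<..<1}"
    have x1: "x \<in> {0<..1}" using x by auto
    have pos: "sM * x \<le> - \<beta> x" using bneg[OF x1] by simp
    have sx: "sM * x > 0" using sM x by simp
    have "q x / (- \<beta> x) \<le> q x / (sM * x)"
      using qnn[of x] x pos sx by (intro divide_left_mono) (auto intro: mult_neg_pos)
    also have "\<dots> = (q x / x) / sM" using x sM by (simp add: field_simps)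
    also have "\<dots> \<le> M / sM" using qM[OF x1] sM by (intro divide_right_mono) auto
    also have "\<dots> = sM" using sM by (simp add: field_simps)
    finally have "q x / (- \<beta> x) \<le> sM" .
    then have ineq: "h x - (Fs + sM) \<ge> h x - c - q x / \<beta> x" unfolding c_def by simp
    have "(\<beta> has_real_derivative h x - (Fs + sM) * 1) (at x)"
      unfolding \<beta>_def using fat[OF x] by (intro DERIV_diff DERIV_cmult DERIV_ident) auto
    then show "\<exists>d. (\<beta> has_real_derivative d) (at x) \<and> d \<ge> h x - c - q x / \<beta> x" using ineq by auto
  qed
  then have "\<exists>z. solP00 h q c z" by (rule P00_from_barrier)
  then show ?thesis unfolding c_def sM_def M_def Fs_def .
qed

end


lemma amgm:
  fixes u a :: real
  assumes "u > 0" "a \<ge> 0"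
  shows "u + a / u \<ge> 2 * sqrt a"
proof -
  have "0 \<le> (u - sqrt a)\<^sup>2" by simp
  also have "\<dots> = u * u - 2 * u * sqrt a + a" using assms by (simp add: power2_eq_square algebra_simps)
  finally have "2 * u * sqrt a \<le> u * u + a" by simp
  then have "2 * sqrt a \<le> (u * u + a) / u" using assms by (simp add: field_simps)
  also have "\<dots> = u + a / u" using assms by (simp add: field_simps)
  finally show ?thesis .
qed

context prob
begin

lemma lower_bound:
  assumes ls: "Limsup (at_right 0) (\<lambda>x. ereal (q x / x)) < \<infinity>" and sol: "solP h q c z"
  shows "h 0 + 2 * sqrt (real_of_ereal (Liminf (at_right 0) (\<lambda>x. ereal (q x / x)))) \<le> c"
proof -
  define Li where "Li = Liminf (at_right 0) (\<lambda>x. ereal (q x / x))"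
  have ev0: "eventually (\<lambda>x. 0 \<le> ereal (q x / x)) (at_right (0::real))"
    unfolding eventually_at_right_field
    by (intro exI[of _ 1]) (auto intro!: divide_nonneg_pos qnn)
  have Li0: "0 \<le> Li" unfolding Li_def using Liminf_bounded[OF ev0] by simp
  have "Li \<le> Limsup (at_right 0) (\<lambda>x. ereal (q x / x))"
    unfolding Li_def by (rule Liminf_le_Limsup) simp
  then have Lif: "Li < \<infinity>" using ls by (rule le_less_trans)
  obtain l where l: "Li = ereal l" "l \<ge> 0" using Li0 Lif by (cases Li) auto
  have rl: "real_of_ereal Li = l" using l by simp
  show ?thesis unfolding Li_def[symmetric] rl
  proof (rule ccontr)
    assume "\<not> h 0 + 2 * sqrt l \<le> c"
    then have cl: "c < h 0 + 2 * sqrt l" by simp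
    define t where "t = (c - h 0) / 2"
    have tl: "t < sqrt l" using cl by (simp add: t_def)
    obtain a where a: "0 \<le> a" "t < sqrt a" "a = 0 \<or> ereal a < Li"
    proof (cases "t < 0")
      case True then show ?thesis using that[of 0] by simp
    next
      case False
      define s where "s = (t + sqrt l) / 2"
      have s: "0 \<le> s" "t < s" "s < sqrt l" using False tl by (auto simp: s_def)
      have "sqrt l > 0" using s by linarith
      then have "l > 0" by simp
      have "s * s < sqrt l * sqrt l" using s \<open>sqrt l > 0\<close> by (intro mult_strict_mono) auto
      then have "s\<^sup>2 < l" using l by (simp add: power2_eq_square)
      moreover have "sqrt (s\<^sup>2) = s" using s by simp
      ultimately show ?thesis using that[of "s\<^sup>2"] s l by auto
    qed
    obtain d1 :: real where d1: "d1 > 0" "\<And>x. 0 < x \<Longrightarrow> x < d1 \<Longrightarrow> q x \<ge> a * x"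
    proof (cases "a = 0")
      case True then show ?thesis using that[of 1] qnn by auto
    next
      case False
      then have "ereal a < Li" using a by auto
      then have "eventually (\<lambda>x. ereal (q x / x) > ereal a) (at_right 0)"
        unfolding Li_def by (rule less_LiminfD)
      then obtain b :: real where b: "b > 0" "\<And>y. y > 0 \<Longrightarrow> y < b \<Longrightarrow> a < q y / y"
        unfolding eventually_at_right_field by auto
      show ?thesis
      proof (rule that[of b])
        fix x :: real assume "0 < x" "x < b"
        then show "q x \<ge> a * x" using b(2)[of x] by (simp add: field_simps)
      qed (use b in auto)
    qed
    define gap where "gap = 2 * sqrt a - (c - h 0)"
    have gap: "gap > 0" using a(2) unfolding gap_def t_def by simp
    define g where "g = gap / 2"
    have g: "g > 0" using gap by (simp add: g_def)
    obtain d2 where d2: "d2 > 0" "\<And>x. x \<in> {0..1} \<Longrightarrow> dist x 0 < d2 \<Longrightarrow> dist (h x) (h 0) < g"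
      using hc g unfolding continuous_on_iff by (metis atLeastAtMost_iff order_refl zero_le_one)
    define \<delta> where "\<delta> = min (min d1 d2) (1/2)"
    have dl: "\<delta> > 0" "\<delta> \<le> d1" "\<delta> \<le> d2" "\<delta> \<le> 1/2" using d1 d2 by (auto simp: \<delta>_def)
    define C where "C = Hm + \<bar>c\<bar> + 1"
    have C: "C > 0" using Hm_nn by (simp add: C_def add_nonneg_pos)
    have zc: "continuous_on {0..1} z" and z0: "z 0 = 0"
      and zd: "\<And>x. x \<in> {0<..<1} \<Longrightarrow> (z has_real_derivative h x - c - q x / z x) (at x)"
      and zn: "\<And>x. x \<in> {0<..<1} \<Longrightarrow> z x < 0"
      using sol unfolding solP_def by auto
    define k where "k x = z x / x" for x
    define \<Phi> where "\<Phi> x = k x - g * ln x" for x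
    have key: "\<exists>y. (\<Phi> has_real_derivative y) (at x) \<and> 0 \<le> y" if x: "0 < x" "x < \<delta>" for x
    proof -
      have x01: "x \<in> {0<..<1}" using x dl by auto
      define z' where "z' = h x - c - q x / z x"
      have "(\<Phi> has_real_derivative ((z' * x - z x * 1) / (x * x) - g * (1 / x))) (at x)"
        unfolding \<Phi>_def k_def z'_def using zd[OF x01] x
        by (intro DERIV_diff DERIV_divide DERIV_ident DERIV_cmult DERIV_ln_divide) auto
      moreover have "(z' * x - z x * 1) / (x * x) - g * (1 / x) \<ge> 0"
      proof -
        define u where "u = - z x / x"
        have u: "u > 0" using zn[OF x01] x by (simp add: u_def divide_neg_pos)
        have "- (q x / z x) = (q x / x) / u" using x zn[OF x01] by (simp add: u_def field_simps)
        also have "\<dots> \<ge> a / u"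
        proof -
          have "a \<le> q x / x" using d1(2)[of x] x dl by (simp add: field_simps)
          then show ?thesis using u by (intro divide_right_mono) auto
        qed
        finally have qa: "- (q x / z x) \<ge> a / u" .
        have "dist (h x) (h 0) < g" using d2(2)[of x] x dl x01 by (auto simp: dist_real_def)
        then have hx: "h x > h 0 - g" by (simp add: dist_real_def abs_less_iff)
        have "z' + u = h x - c + (- (q x / z x)) + u" by (simp add: z'_def)
        also have "\<dots> \<ge> h x - c + 2 * sqrt a" using qa amgm[OF u a(1)] by linarith
        finally have "z' + u \<ge> h x - c + 2 * sqrt a" .
        moreover have "h 0 - g - c + 2 * sqrt a = g" unfolding g_def gap_def by (simp add: field_simps)
        ultimately have "z' + u \<ge> g" using hx by linarith
        moreover have "(z' * x - z x * 1) / (x * x) - g * (1 / x) = (z' + u - g) / x"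
          using x by (simp add: u_def field_simps)
        ultimately show ?thesis using x by simp
      qed
      ultimately show ?thesis by blast
    qed
    define x2 where "x2 = \<delta> / 2"
    define x1 where "x1 = x2 * exp (- (C / g + 1))"
    have x2: "0 < x2" "x2 < \<delta>" using dl by (auto simp: x2_def)
    have "C / g > 0" using C g by simp
    then have x1: "0 < x1" "x1 < x2" using x2 by (auto simp: x1_def)
    have "\<Phi> x1 \<le> \<Phi> x2"
    proof (rule DERIV_nonneg_imp_increasing_open[of x1 x2 \<Phi>])
      show "\<And>x. x1 < x \<Longrightarrow> x < x2 \<Longrightarrow> \<exists>y. (\<Phi> has_real_derivative y) (at x) \<and> 0 \<le> y"
        using key x1 x2 by auto
      show "continuous_on {x1..x2} \<Phi>"
      proof (intro continuous_at_imp_continuous_on ballI)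
        fix x assume "x \<in> {x1..x2}"
        then have "0 < x" "x < \<delta>" using x1 x2 by auto
        then show "isCont \<Phi> x" using key by (meson DERIV_isCont)
      qed
    qed (use x1 in auto)
    then have "k x1 \<le> k x2 - g * (ln x2 - ln x1)" unfolding \<Phi>_def by (simp add: algebra_simps)
    moreover have "ln x2 - ln x1 = C / g + 1" using x2 by (simp add: x1_def ln_mult)
    moreover have "k x2 < 0" using zn[of x2] x2 dl by (auto simp: k_def divide_neg_pos)
    ultimately have k1: "k x1 < - C - g" using g by (simp add: algebra_simps)
    have "z x1 \<ge> z 0 - C * (x1 - 0)"
    proof (rule lower_by_deriv[where y'="\<lambda>t. h t - c - q t / z t"])
      show "continuous_on {0..x1} z" using x1 x2 dl by (intro continuous_on_subset[OF zc]) auto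
    next
      fix s assume s: "s \<in> {0<..<x1}"
      then have s01: "s \<in> {0<..<1}" using x1 x2 dl by auto
      show "(z has_real_derivative h s - c - q s / z s) (at s)" by (rule zd[OF s01])
      have "q s / z s \<le> 0" using qnn[of s] zn[OF s01] s01 by (intro divide_nonneg_neg) auto
      then show "h s - c - q s / z s \<ge> - C" using Hm[of s] s01 unfolding C_def by (auto simp: abs_le_iff)
    qed (use x1 in auto)
    then have "k x1 \<ge> - C" using z0 x1 by (simp add: k_def field_simps)
    then show False using k1 g by simp
  qed
qed

end


theorem proposition4p2:
  fixes f h q :: "real \<Rightarrow> real"
  assumes f_deriv: "\<forall>x\<in>{0..1}. (f has_real_derivative h x) (at x within {0..1})"
    and h_cont: "continuous_on {0..1} h"
    and f0: "f 0 = 0"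
    and q: "cond_q q"
  shows "\<exists>cs::real.
     h 0 + 2 * sqrt (real_of_ereal (Liminf (at_right 0) (\<lambda>x. ereal (q x / x)))) \<le> cs \<and>
     cs \<le> 2 * sqrt (Sup ((\<lambda>x. q x / x) ` {0<..1})) + Sup ((\<lambda>x. f x / x) ` {0<..1}) \<and>
     (\<forall>c. (\<exists>z. solP00 h q c z) \<longleftrightarrow> c \<ge> cs) \<and>
     (\<forall>c\<ge>cs. \<forall>z1 z2. solP00 h q c z1 \<and> solP00 h q c z2 \<longrightarrow> (\<forall>x\<in>{0..1}. z1 x = z2 x))"
proof -
  have qc: "continuous_on {0..1} q" and qp: "\<forall>x\<in>{0<..<1}. q x > 0" and q0: "q 0 = 0" and q1: "q 1 = 0"
    and ls: "Limsup (at_right 0) (\<lambda>x. ereal (q x / x)) < \<infinity>"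
    using q unfolding cond_q_def by auto
  interpret P: prob h q
    by unfold_locales (use h_cont qc qp q0 q1 in auto)
  define S where "S = {c. \<exists>z. solP00 h q c z}"
  define U where "U = 2 * sqrt (Sup ((\<lambda>x. q x / x) ` {0<..1})) + Sup ((\<lambda>x. f x / x) ` {0<..1})"
  define L where "L = h 0 + 2 * sqrt (real_of_ereal (Liminf (at_right 0) (\<lambda>x. ereal (q x / x))))"
  have US: "U \<in> S" unfolding S_def U_def using P.upper_exists[OF f_deriv f0 ls] by simp
  have LS: "L \<le> c" if cS: "c \<in> S" for c
  proof -
    obtain z where "solP00 h q c z" using cS unfolding S_def by auto
    then have "solP h q c z" unfolding solP00_def by auto
    then show ?thesis unfolding L_def by (rule P.lower_bound[OF ls])
  qed
  have bS: "bdd_below S" using LS by (intro bdd_belowI[of _ L]) auto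
  have Sne: "S \<noteq> {}" using US by auto
  define cs where "cs = Inf S"
  have up: "c \<in> S" if cgt: "c > cs" for c
  proof -
    obtain c0 where c0: "c0 \<in> S" "c0 < c" using cgt unfolding cs_def using cInf_less_iff[OF Sne bS] by auto
    then obtain z where "solP00 h q c0 z" unfolding S_def by auto
    then show ?thesis unfolding S_def using P.P00_up c0 by auto
  qed
  have csS: "cs \<in> S" unfolding S_def using P.P00_closed[of cs] up unfolding S_def by auto
  show ?thesis
    unfolding L_def[symmetric] U_def[symmetric]
  proof (intro exI[of _ cs] conjI allI impI iffI)
    show "L \<le> cs" by (rule LS[OF csS])
    show "cs \<le> U" unfolding cs_def by (rule cInf_lower[OF US bS])
  next
    fix c assume "\<exists>z. solP00 h q c z"
    then have "c \<in> S" unfolding S_def by auto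
    then show "cs \<le> c" unfolding cs_def by (rule cInf_lower[OF _ bS])
  next
    fix c assume c: "cs \<le> c"
    show "\<exists>z. solP00 h q c z"
    proof (cases "c = cs")
      case True then show ?thesis using csS unfolding S_def by auto
    next
      case False then show ?thesis using up[of c] c unfolding S_def by auto
    qed
  next
    fix c z1 z2 assume "cs \<le> c" and zz: "solP00 h q c z1 \<and> solP00 h q c z2"
    show "\<forall>x\<in>{0..1}. z1 x = z2 x"
    proof
      fix x :: real assume x: "x \<in> {0..1}"
      show "z1 x = z2 x" using P.P00_order[OF order_refl _ _ x, of c z1 z2] P.P00_order[OF order_refl _ _ x, of c z2 z1] zz
        by auto
    qed
  qed
qed

end
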